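(* Let $0<\alpha<1$, $k\ge1$, $\varphi_{\text{in}}>0$, and let $G=(V_G,E_G)$ be a $(k,\varphi_{\text{in}})$-clusterable graph with minimum degree at least $1$. Then there exists $V'_G\subseteq V_G$ with $\mathrm{vol}(V'_G)\ge(1-\alpha)\mathrm{vol}(V_G)$ such that for every integer $t\ge\frac{2\ln(\mathrm{vol}(V_G))}{\varphi_{\text{in}}^2}$ and every $u\in V'_G$, $\|D^{-1/2}M^t\mathbb{1}_u\|_2^2\le\frac{2k}{\alpha\,\mathrm{vol}(V_G)}$.
   Context: $A$ adjacency matrix, $D$ diagonal degree matrix, $M=(I+AD^{-1})/2$ lazy random walk matrix. $\mathrm{vol}(S)=\sum_{v\in S}\deg(v)$; $\phi^G_C(S)=|E(S,C\setminus S)|/\mathrm{vol}(S)$; $\phi^G(C)=\min\{\phi^G_C(S):S\subseteq C,0<\mathrm{vol}(S)\le\mathrm{vol}(C)/2\}$ if $|C|>1$, else $1$. $G$ is $(k,\varphi)$-clusterable if $V_G$ can be partitioned into $h\le k$ sets $C_i$ with $\phi^G(C_i)\ge\varphi$. *)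

theory Defs
  imports Complex_Main
begin

definition graph :: "'a set \<Rightarrow> ('a \<Rightarrow> 'a \<Rightarrow> bool) \<Rightarrow> bool" where
  "graph V E \<longleftrightarrow> finite V \<and> (\<forall>x y. E x y \<longrightarrow> x \<in> V \<and> y \<in> V)
     \<and> (\<forall>x y. E x y \<longrightarrow> E y x) \<and> (\<forall>x. \<not> E x x)"

definition deg :: "'a set \<Rightarrow> ('a \<Rightarrow> 'a \<Rightarrow> bool) \<Rightarrow> 'a \<Rightarrow> nat" where
  "deg V E v = card {w \<in> V. E v w}"

definition vol :: "'a set \<Rightarrow> ('a \<Rightarrow> 'a \<Rightarrow> bool) \<Rightarrow> 'a set \<Rightarrow> real" where
  "vol V E S = (\<Sum>v\<in>S. real (deg V E v))"

text \<open>Number of edges between S and C - S (S and C - S are disjoint, so each edge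
is counted once as an ordered pair).\<close>
definition cut_edges :: "('a \<Rightarrow> 'a \<Rightarrow> bool) \<Rightarrow> 'a set \<Rightarrow> 'a set \<Rightarrow> nat" where
  "cut_edges E S C = card {(x, y). x \<in> S \<and> y \<in> C - S \<and> E x y}"

definition cond_in :: "'a set \<Rightarrow> ('a \<Rightarrow> 'a \<Rightarrow> bool) \<Rightarrow> 'a set \<Rightarrow> 'a set \<Rightarrow> real" where
  "cond_in V E C S = real (cut_edges E S C) / vol V E S"

definition cond :: "'a set \<Rightarrow> ('a \<Rightarrow> 'a \<Rightarrow> bool) \<Rightarrow> 'a set \<Rightarrow> real" where
  "cond V E C = (if card C > 1 then
      Min {cond_in V E C S | S. S \<subseteq> C \<and> 0 < vol V E S \<and> vol V E S \<le> vol V E C / 2}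
    else 1)"

definition clusterable :: "'a set \<Rightarrow> ('a \<Rightarrow> 'a \<Rightarrow> bool) \<Rightarrow> nat \<Rightarrow> real \<Rightarrow> bool" where
  "clusterable V E k \<phi> \<longleftrightarrow> (\<exists>P. finite P \<and> card P \<le> k \<and> (\<forall>C\<in>P. C \<noteq> {})
     \<and> (\<forall>C\<in>P. \<forall>C'\<in>P. C \<noteq> C' \<longrightarrow> C \<inter> C' = {}) \<and> \<Union>P = V
     \<and> (\<forall>C\<in>P. cond V E C \<ge> \<phi>))"

text \<open>Lazy random walk M = (I + A D^{-1})/2 applied t times to the vector p.\<close>
fun walk :: "'a set \<Rightarrow> ('a \<Rightarrow> 'a \<Rightarrow> bool) \<Rightarrow> nat \<Rightarrow> ('a \<Rightarrow> real) \<Rightarrow> 'a \<Rightarrow> real" where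
  "walk V E 0 p = p"
| "walk V E (Suc t) p = (\<lambda>v. let q = walk V E t p in
      (q v + (\<Sum>w\<in>{w \<in> V. E v w}. q w / real (deg V E w))) / 2)"

definition indicator_vec :: "'a \<Rightarrow> 'a \<Rightarrow> real" where
  "indicator_vec u = (\<lambda>v. if v = u then 1 else 0)"

definition Dnorm_sq :: "'a set \<Rightarrow> ('a \<Rightarrow> 'a \<Rightarrow> bool) \<Rightarrow> ('a \<Rightarrow> real) \<Rightarrow> real" where
  "Dnorm_sq V E x = (\<Sum>v\<in>V. (x v)\<^sup>2 / real (deg V E v))"

end

theory Submission
  imports Defs "HOL-Analysis.Analysis"
begin


lemma quad_disc:
  fixes a b c :: real
  assumes "\<And>t. 0 \<le> a + 2*b*t + c*t^2" and "c \<ge> 0"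
  shows "b^2 \<le> a*c"
proof (cases "c = 0")
  case True
  show ?thesis
  proof (cases "b = 0")
    case False
    have "0 \<le> a + 2*b*(-(a+1)/(2*b)) + c*(-(a+1)/(2*b))^2" by (rule assms(1))
    also have "\<dots> = -1" using True False by (simp add: field_simps)
    finally show ?thesis by simp
  qed (use True in simp)
next
  case False
  hence c: "c > 0" using assms(2) by simp
  have "0 \<le> a + 2*b*(-b/c) + c*(-b/c)^2" by (rule assms(1))
  also have "\<dots> = a - b^2/c" using c by (simp add: field_simps power2_eq_square)
  finally have "b^2/c \<le> a" by simp
  thus ?thesis using c by (simp add: field_simps mult.commute)
qed

lemma homog_exists:
  fixes F :: "('j \<Rightarrow> real) set" and J :: "'j set"
  assumes "finite J" "finite F" "card F < card J"
  shows "\<exists>c. (\<exists>j\<in>J. c j \<noteq> 0) \<and> (\<forall>a\<in>F. (\<Sum>j\<in>J. a j * c j) = 0)"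
  using assms
proof (induction "card F" arbitrary: F J rule: less_induct)
  case less
  show ?case
  proof (cases "F = {}")
    case True
    from less.prems have "J \<noteq> {}" by auto
    then obtain j where "j \<in> J" by auto
    thus ?thesis using True by (intro exI[of _ "\<lambda>_. 1"]) auto
  next
    case False
    then obtain a where aF: "a \<in> F" by auto
    have cardF: "card (F - {a}) < card F" using aF less.prems
      by (meson card_Diff1_less)
    show ?thesis
    proof (cases "\<forall>j\<in>J. a j = 0")
      case True
      have "card (F - {a}) < card J" using cardF less.prems by linarith
      from less.hyps[OF cardF less.prems(1) _ this] less.prems
      obtain c where c: "\<exists>j\<in>J. c j \<noteq> 0" "\<forall>b\<in>F-{a}. (\<Sum>j\<in>J. b j * c j) = 0" by auto
      have "\<forall>b\<in>F. (\<Sum>j\<in>J. b j * c j) = 0"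
      proof
        fix b assume "b \<in> F"
        show "(\<Sum>j\<in>J. b j * c j) = 0"
        proof (cases "b = a")
          case True thus ?thesis using \<open>\<forall>j\<in>J. a j = 0\<close> by simp
        qed (use c \<open>b \<in> F\<close> in auto)
      qed
      thus ?thesis using c by blast
    next
      case False
      then obtain j0 where j0: "j0 \<in> J" "a j0 \<noteq> 0" by auto
      define J' where "J' = J - {j0}"
      define tr where "tr = (\<lambda>b::'j\<Rightarrow>real. \<lambda>j. b j - b j0 / a j0 * a j)"
      define F' where "F' = tr ` (F - {a})"
      have fJ': "finite J'" using less.prems J'_def by auto
      have cJ': "card J' = card J - 1" using J'_def j0 less.prems by auto
      have cF': "card F' \<le> card (F - {a})" unfolding F'_def by (rule card_image_le) (use less.prems in auto)
      have lt: "card F' < card F" using cF' cardF by linarith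
      have "card (F - {a}) = card F - 1" using aF less.prems by (simp add: card_Diff_singleton)
      hence cF'J: "card F' < card J'" using cF' cJ' less.prems(3) cardF by linarith
      from less.hyps[OF lt fJ' _ cF'J]
      obtain c' where c': "\<exists>j\<in>J'. c' j \<noteq> 0" "\<forall>b\<in>F'. (\<Sum>j\<in>J'. b j * c' j) = 0"
        unfolding F'_def using less.prems by auto
      define c where "c = c'(j0 := - (\<Sum>j\<in>J'. a j * c' j) / a j0)"
      have sumsplit: "(\<Sum>j\<in>J. b j * c j) = b j0 * c j0 + (\<Sum>j\<in>J'. b j * c' j)" for b
      proof -
        have "(\<Sum>j\<in>J. b j * c j) = b j0 * c j0 + (\<Sum>j\<in>J'. b j * c j)"
          unfolding J'_def using j0 less.prems by (simp add: sum.remove)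
        moreover have "(\<Sum>j\<in>J'. b j * c j) = (\<Sum>j\<in>J'. b j * c' j)"
          by (rule sum.cong) (auto simp: c_def J'_def)
        ultimately show ?thesis by simp
      qed
      have "\<forall>b\<in>F. (\<Sum>j\<in>J. b j * c j) = 0"
      proof
        fix b assume bF: "b \<in> F"
        show "(\<Sum>j\<in>J. b j * c j) = 0"
        proof (cases "b = a")
          case True
          thus ?thesis using sumsplit[of a] j0 by (simp add: c_def)
        next
          case False
          hence "tr b \<in> F'" using bF unfolding F'_def by auto
          hence "(\<Sum>j\<in>J'. tr b j * c' j) = 0" using c' by auto
          hence "(\<Sum>j\<in>J'. b j * c' j) - b j0 / a j0 * (\<Sum>j\<in>J'. a j * c' j) = 0"
            unfolding tr_def by (simp add: algebra_simps sum_subtractf sum_distrib_left)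
          thus ?thesis using sumsplit[of b] j0 by (simp add: c_def field_simps)
        qed
      qed
      moreover have "\<exists>j\<in>J. c j \<noteq> 0" using c' by (auto simp: c_def J'_def)
      ultimately show ?thesis by blast
    qed
  qed
qed



locale gr =
  fixes V :: "'a set" and E :: "'a \<Rightarrow> 'a \<Rightarrow> bool"
  assumes G: "graph V E" and dpos: "\<forall>v\<in>V. deg V E v \<ge> 1"
begin

definition "d v = real (deg V E v)"
definition "sd v = sqrt (d v)"
definition ip :: "('a \<Rightarrow> real) \<Rightarrow> ('a \<Rightarrow> real) \<Rightarrow> real" where "ip x y = (\<Sum>v\<in>V. x v * y v)"
definition nsq :: "('a \<Rightarrow> real) \<Rightarrow> real" where "nsq x = ip x x"
definition vecV :: "('a \<Rightarrow> real) \<Rightarrow> bool" where "vecV x \<longleftrightarrow> (\<forall>v. v \<notin> V \<longrightarrow> x v = 0)"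
definition "K v w = ((if v = w then 1 else 0) + (if E v w then 1 / (sd v * sd w) else 0)) / (2::real)"
definition Nop :: "('a \<Rightarrow> real) \<Rightarrow> 'a \<Rightarrow> real" where "Nop x = (\<lambda>v. if v \<in> V then (\<Sum>w\<in>V. K v w * x w) else 0)"
definition bil :: "('a \<Rightarrow> real) \<Rightarrow> ('a \<Rightarrow> real) \<Rightarrow> real" where "bil x y = (\<Sum>a\<in>V. \<Sum>b\<in>V. if E a b then x a * y b / (sd a * sd b) else 0)"
definition Qm :: "('a \<Rightarrow> real) \<Rightarrow> real" where "Qm x = (\<Sum>a\<in>V. \<Sum>b\<in>V. if E a b then (x a / sd a - x b / sd b)^2 else 0)"
definition Qp :: "('a \<Rightarrow> real) \<Rightarrow> real" where "Qp x = (\<Sum>a\<in>V. \<Sum>b\<in>V. if E a b then (x a / sd a + x b / sd b)^2 else 0)"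

lemma finV: "finite V" using G by (simp add: graph_def)
lemma Ein: "E a b \<Longrightarrow> a \<in> V \<and> b \<in> V" using G by (simp add: graph_def)
lemma Esym: "E a b \<Longrightarrow> E b a" using G by (simp add: graph_def)
lemma Eirr: "\<not> E a a" using G by (simp add: graph_def)
lemma dpos': "v \<in> V \<Longrightarrow> d v \<ge> 1" using dpos by (auto simp: d_def)
lemma dpos2: "v \<in> V \<Longrightarrow> d v > 0" using dpos'[of v] by linarith
lemma sdpos: "v \<in> V \<Longrightarrow> sd v > 0" using dpos2[of v] by (simp add: sd_def)
lemma sdsq: "v \<in> V \<Longrightarrow> sd v * sd v = d v" using dpos2[of v] by (simp add: sd_def)

lemma deg_sum: "a \<in> V \<Longrightarrow> (\<Sum>b\<in>V. if E a b then 1 else 0) = d a"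
proof -
  have "(\<Sum>b\<in>{b\<in>V. E a b}. 1::real) = (\<Sum>b\<in>V. if E a b then 1 else (0::real))"
    by (rule sum.inter_filter[OF finV])
  thus ?thesis by (simp add: d_def deg_def)
qed

lemma Ksym: "K v w = K w v"
  unfolding K_def using Esym by (auto simp: mult.commute)

lemma ip_sym: "ip x y = ip y x" unfolding ip_def by (rule sum.cong) (auto simp: mult.commute)

lemma ip_Nop: "ip x (Nop y) = (\<Sum>v\<in>V. \<Sum>w\<in>V. x v * K v w * y w)"
  unfolding ip_def Nop_def by (auto intro!: sum.cong simp: sum_distrib_left mult.assoc)

lemma Nop_sym: "ip (Nop x) y = ip x (Nop y)"
proof -
  have "ip (Nop x) y = ip y (Nop x)" by (rule ip_sym)
  also have "\<dots> = (\<Sum>v\<in>V. \<Sum>w\<in>V. y v * K v w * x w)" by (rule ip_Nop)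
  also have "\<dots> = (\<Sum>w\<in>V. \<Sum>v\<in>V. y v * K v w * x w)" by (rule sum.swap)
  also have "\<dots> = (\<Sum>w\<in>V. \<Sum>v\<in>V. x w * K w v * y v)"
    by (simp add: Ksym mult.commute mult.left_commute)
  also have "\<dots> = ip x (Nop y)" by (rule ip_Nop[symmetric])
  finally show ?thesis .
qed

lemma ip_Nop_bil: "ip x (Nop y) = (ip x y + bil x y) / 2"
proof -
  have "ip x (Nop y) = (\<Sum>v\<in>V. \<Sum>w\<in>V. x v * K v w * y w)" by (rule ip_Nop)
  also have "\<dots> = (\<Sum>v\<in>V. (x v * y v + (\<Sum>w\<in>V. if E v w then x v * y w / (sd v * sd w) else 0)) / 2)"
  proof (rule sum.cong[OF refl])
    fix v assume v: "v \<in> V"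
    have "(\<Sum>w\<in>V. x v * K v w * y w) = (\<Sum>w\<in>V. ((if v = w then x v * y w else 0) + (if E v w then x v * y w / (sd v * sd w) else 0)) / 2)"
      by (rule sum.cong) (auto simp: K_def field_simps)
    also have "\<dots> = (x v * y v + (\<Sum>w\<in>V. if E v w then x v * y w / (sd v * sd w) else 0)) / 2"
      using v finV by (simp add: sum_divide_distrib[symmetric] sum.distrib sum.delta)
    finally show "(\<Sum>w\<in>V. x v * K v w * y w) = \<dots>" .
  qed
  also have "\<dots> = (ip x y + bil x y) / 2"
    by (simp add: ip_def bil_def sum_divide_distrib[symmetric] sum.distrib)
  finally show ?thesis .
qed

lemma sum_sq_left: "(\<Sum>a\<in>V. \<Sum>b\<in>V. if E a b then (x a / sd a)^2 else 0) = nsq x"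
proof -
  have "(\<Sum>a\<in>V. \<Sum>b\<in>V. if E a b then (x a / sd a)^2 else 0) = (\<Sum>a\<in>V. (x a / sd a)^2 * (\<Sum>b\<in>V. if E a b then 1 else 0))"
    by (simp add: sum_distrib_left if_distrib cong: if_cong)
  also have "\<dots> = (\<Sum>a\<in>V. x a * x a)"
    by (rule sum.cong) (auto simp: deg_sum power_divide power2_eq_square sdsq dest: dpos' intro!: sum.cong)
  finally show ?thesis by (simp add: nsq_def ip_def)
qed

lemma sum_sq_right: "(\<Sum>a\<in>V. \<Sum>b\<in>V. if E a b then (x b / sd b)^2 else 0) = nsq x"
proof -
  have "(\<Sum>a\<in>V. \<Sum>b\<in>V. if E a b then (x b / sd b)^2 else 0) = (\<Sum>b\<in>V. \<Sum>a\<in>V. if E a b then (x b / sd b)^2 else 0)"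
    by (rule sum.swap)
  also have "\<dots> = (\<Sum>b\<in>V. \<Sum>a\<in>V. if E b a then (x b / sd b)^2 else 0)"
    by (intro sum.cong refl) (metis Esym)
  finally show ?thesis using sum_sq_left by simp
qed

lemma sqd: "(p / s - q / t)^2 = (p / s)^2 + (q / t)^2 - 2 * (p * q / (s * t))" for p q s t :: real
  by (simp add: power2_diff)
lemma sqs: "(p / s + q / t)^2 = (p / s)^2 + (q / t)^2 + 2 * (p * q / (s * t))" for p q s t :: real
  by (simp add: power2_sum)

lemma Qm_eq: "Qm x = 2 * nsq x - 2 * bil x x"
proof -
  have "Qm x = (\<Sum>a\<in>V. \<Sum>b\<in>V. (if E a b then (x a / sd a)^2 else 0) + (if E a b then (x b / sd b)^2 else 0) - 2 * (if E a b then x a * x b / (sd a * sd b) else 0))"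
    unfolding Qm_def by (intro sum.cong refl) (auto simp: sqd)
  also have "\<dots> = 2 * nsq x - 2 * bil x x"
    by (simp add: sum.distrib sum_subtractf sum_distrib_left[symmetric] sum_sq_left sum_sq_right bil_def)
  finally show ?thesis .
qed

lemma Qp_eq: "Qp x = 2 * nsq x + 2 * bil x x"
proof -
  have "Qp x = (\<Sum>a\<in>V. \<Sum>b\<in>V. (if E a b then (x a / sd a)^2 else 0) + (if E a b then (x b / sd b)^2 else 0) + 2 * (if E a b then x a * x b / (sd a * sd b) else 0))"
    unfolding Qp_def by (intro sum.cong refl) (auto simp: sqs)
  also have "\<dots> = 2 * nsq x + 2 * bil x x"
    by (simp add: sum.distrib sum_distrib_left[symmetric] sum_sq_left sum_sq_right bil_def)
  finally show ?thesis .
qed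

lemma Qp_nonneg: "Qp x \<ge> 0" unfolding Qp_def by (intro sum_nonneg) auto
lemma Qm_nonneg: "Qm x \<ge> 0" unfolding Qm_def by (intro sum_nonneg) auto

lemma quad_eq: "ip x (Nop x) = nsq x - Qm x / 4"
  using ip_Nop_bil[of x x] Qm_eq[of x] unfolding nsq_def by (simp add: field_simps)

lemma psd: "ip x (Nop x) \<ge> 0"
  using ip_Nop_bil[of x x] Qp_eq[of x] Qp_nonneg[of x] unfolding nsq_def by (simp add: field_simps)

lemma quad_le: "ip x (Nop x) \<le> nsq x"
  using quad_eq[of x] Qm_nonneg[of x] by simp

end


lemma cs2:
  fixes f g :: "'b \<Rightarrow> 'b \<Rightarrow> real"
  shows "(\<Sum>a\<in>A. \<Sum>b\<in>A. f a b * g a b)^2 \<le> (\<Sum>a\<in>A. \<Sum>b\<in>A. (f a b)^2) * (\<Sum>a\<in>A. \<Sum>b\<in>A. (g a b)^2)"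
proof (rule quad_disc)
  fix t :: real
  have "0 \<le> (\<Sum>a\<in>A. \<Sum>b\<in>A. (f a b + t * g a b)^2)" by (intro sum_nonneg) auto
  also have "\<dots> = (\<Sum>a\<in>A. \<Sum>b\<in>A. (f a b)^2 + 2 * t * (f a b * g a b) + t^2 * (g a b)^2)"
    by (intro sum.cong refl) (simp add: power2_sum power_mult_distrib algebra_simps)
  also have "\<dots> = (\<Sum>a\<in>A. \<Sum>b\<in>A. (f a b)^2) + 2 * (\<Sum>a\<in>A. \<Sum>b\<in>A. f a b * g a b) * t + (\<Sum>a\<in>A. \<Sum>b\<in>A. (g a b)^2) * t^2"
    by (simp add: sum.distrib sum_distrib_left sum_distrib_right algebra_simps)
  finally show "0 \<le> (\<Sum>a\<in>A. \<Sum>b\<in>A. (f a b)^2) + 2 * (\<Sum>a\<in>A. \<Sum>b\<in>A. f a b * g a b) * t + (\<Sum>a\<in>A. \<Sum>b\<in>A. (g a b)^2) * t^2" .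
qed (intro sum_nonneg; auto)

context gr begin

definition vol' :: "'a set \<Rightarrow> real" where "vol' S = (\<Sum>v\<in>S. d v)"
definition QC :: "'a set \<Rightarrow> ('a \<Rightarrow> real) \<Rightarrow> real" where
  "QC C g = (\<Sum>a\<in>C. \<Sum>b\<in>C. if E a b then (g a - g b)^2 else 0)"
definition cutc :: "'a set \<Rightarrow> 'a set \<Rightarrow> real" where
  "cutc S C = real (card {(x, y). x \<in> S \<and> y \<in> C - S \<and> E x y})"

lemma d_nonneg: "v \<in> V \<Longrightarrow> d v \<ge> 0" using dpos2[of v] by simp

lemma vol'_nonneg: "S \<subseteq> V \<Longrightarrow> vol' S \<ge> 0"
  unfolding vol'_def using dpos' by (intro sum_nonneg) force

lemma vol'_mono: "S \<subseteq> T \<Longrightarrow> T \<subseteq> V \<Longrightarrow> vol' S \<le> vol' T"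
  unfolding vol'_def using dpos' finV
  by (intro sum_mono2) (auto intro: finite_subset simp: subset_iff, force)

lemma cut_count:
  assumes CV: "C \<subseteq> V" and SC: "S \<subseteq> C"
  shows "(\<Sum>a\<in>C. \<Sum>b\<in>C. if E a b then \<bar>(if a \<in> S then 1 else 0) - (if b \<in> S then 1 else (0::real))\<bar> else 0)
         = 2 * cutc S C"
proof -
  have fC: "finite C" using CV finV finite_subset by auto
  have fS: "finite S" using SC fC finite_subset by auto
  define f where "f = (\<lambda>a b. if E a b then \<bar>(if a \<in> S then 1 else 0) - (if b \<in> S then 1 else (0::real))\<bar> else 0)"
  have one: "(\<Sum>a\<in>S. \<Sum>b\<in>C - S. if E a b then 1 else (0::real)) = cutc S C"
  proof -
    have eq: "{(x, y). x \<in> S \<and> y \<in> C - S \<and> E x y} = Sigma S (\<lambda>x. {y \<in> C - S. E x y})" by auto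
    have "card (Sigma S (\<lambda>x. {y \<in> C - S. E x y})) = (\<Sum>x\<in>S. card {y \<in> C - S. E x y})"
      by (rule card_SigmaI) (use fS fC in auto)
    moreover have "real (card {y \<in> C - S. E x y}) = (\<Sum>b\<in>C - S. if E x b then 1 else (0::real))" for x
    proof -
      have "(\<Sum>b\<in>{b\<in>C - S. E x b}. 1::real) = (\<Sum>b\<in>C - S. if E x b then 1 else (0::real))"
        by (rule sum.inter_filter) (use fC in auto)
      thus ?thesis by simp
    qed
    ultimately show ?thesis unfolding cutc_def eq by simp
  qed
  have two: "(\<Sum>a\<in>C - S. \<Sum>b\<in>S. if E a b then 1 else (0::real)) = cutc S C"
  proof -
    have "(\<Sum>a\<in>C - S. \<Sum>b\<in>S. if E a b then 1 else (0::real)) = (\<Sum>b\<in>S. \<Sum>a\<in>C - S. if E a b then 1 else (0::real))"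
      by (rule sum.swap)
    also have "\<dots> = (\<Sum>b\<in>S. \<Sum>a\<in>C - S. if E b a then 1 else (0::real))"
      by (intro sum.cong refl) (metis Esym)
    finally show ?thesis using one by simp
  qed
  have split: "(\<Sum>a\<in>C. g a) = (\<Sum>a\<in>C - S. g a) + (\<Sum>a\<in>S. g a)" for g :: "'a \<Rightarrow> real"
    by (rule sum.subset_diff[OF SC fC])
  have "(\<Sum>a\<in>C. \<Sum>b\<in>C. f a b) = (\<Sum>a\<in>C - S. \<Sum>b\<in>C. f a b) + (\<Sum>a\<in>S. \<Sum>b\<in>C. f a b)"
    by (rule split)
  also have "(\<Sum>a\<in>C - S. \<Sum>b\<in>C. f a b) = (\<Sum>a\<in>C - S. \<Sum>b\<in>S. if E a b then 1 else 0)"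
  proof (rule sum.cong[OF refl])
    fix a assume a: "a \<in> C - S"
    have "(\<Sum>b\<in>C. f a b) = (\<Sum>b\<in>C - S. f a b) + (\<Sum>b\<in>S. f a b)" by (rule split)
    also have "(\<Sum>b\<in>C - S. f a b) = 0" using a by (intro sum.neutral) (auto simp: f_def)
    also have "(\<Sum>b\<in>S. f a b) = (\<Sum>b\<in>S. if E a b then 1 else 0)"
      using a by (intro sum.cong refl) (auto simp: f_def)
    finally show "(\<Sum>b\<in>C. f a b) = (\<Sum>b\<in>S. if E a b then 1 else 0)" by simp
  qed
  also have "(\<Sum>a\<in>S. \<Sum>b\<in>C. f a b) = (\<Sum>a\<in>S. \<Sum>b\<in>C - S. if E a b then 1 else 0)"
  proof (rule sum.cong[OF refl])
    fix a assume a: "a \<in> S"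
    have "(\<Sum>b\<in>C. f a b) = (\<Sum>b\<in>C - S. f a b) + (\<Sum>b\<in>S. f a b)" by (rule split)
    also have "(\<Sum>b\<in>S. f a b) = 0" using a by (intro sum.neutral) (auto simp: f_def)
    also have "(\<Sum>b\<in>C - S. f a b) = (\<Sum>b\<in>C - S. if E a b then 1 else 0)"
      using a by (intro sum.cong refl) (auto simp: f_def)
    finally show "(\<Sum>b\<in>C. f a b) = (\<Sum>b\<in>C - S. if E a b then 1 else 0)" by simp
  qed
  finally show ?thesis using one two unfolding f_def by simp
qed


lemma coarea:
  assumes CV: "C \<subseteq> V" and phi: "\<phi> \<ge> 0"
    and hC: "\<And>S. S \<subseteq> C \<Longrightarrow> S \<noteq> {} \<Longrightarrow> vol' S \<le> vol' C / 2 \<Longrightarrow> cutc S C \<ge> \<phi> * vol' S"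
  shows "(\<And>a. a \<in> C \<Longrightarrow> s a \<ge> 0) \<Longrightarrow> vol' {a\<in>C. s a > 0} \<le> vol' C / 2 \<Longrightarrow>
    2 * \<phi> * (\<Sum>a\<in>C. d a * s a) \<le> (\<Sum>a\<in>C. \<Sum>b\<in>C. if E a b then \<bar>s a - s b\<bar> else 0)"
proof (induction "card {a\<in>C. s a > 0}" arbitrary: s rule: less_induct)
  case less
  have fC: "finite C" using CV finV finite_subset by auto
  define S where "S = {a\<in>C. s a > 0}"
  have SC: "S \<subseteq> C" by (auto simp: S_def)
  have fS: "finite S" using fC SC finite_subset by auto
  have RHSnn: "0 \<le> (\<Sum>a\<in>C. \<Sum>b\<in>C. if E a b then \<bar>s' a - s' b\<bar> else 0)" for s' :: "'a \<Rightarrow> real"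
    by (intro sum_nonneg) auto
  show ?case
  proof (cases "S = {}")
    case True
    hence "\<forall>a\<in>C. s a = 0" using less.prems(1) by (force simp: S_def)
    hence "(\<Sum>a\<in>C. d a * s a) = 0" by simp
    thus ?thesis using RHSnn[of s] by simp
  next
    case False
    define m where "m = Min (s ` S)"
    have mS: "m \<in> s ` S" unfolding m_def using False fS by (intro Min_in) auto
    then obtain a0 where a0: "a0 \<in> S" "s a0 = m" by auto
    have mle: "\<And>a. a \<in> S \<Longrightarrow> m \<le> s a" unfolding m_def using fS by auto
    have mpos: "m > 0" using a0 by (auto simp: S_def)
    define s' where "s' = (\<lambda>a. if a \<in> S then s a - m else 0)"
    have s'nn: "\<And>a. a \<in> C \<Longrightarrow> s' a \<ge> 0" using mle by (auto simp: s'_def)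
    have sub: "{a\<in>C. s' a > 0} \<subseteq> S - {a0}" using a0 by (auto simp: s'_def)
    have cardlt: "card {a\<in>C. s' a > 0} < card {a\<in>C. s a > 0}"
    proof -
      have "card {a\<in>C. s' a > 0} \<le> card (S - {a0})" by (rule card_mono) (use fS sub in auto)
      also have "\<dots> < card S" using a0 fS by (meson card_Diff1_less)
      finally show ?thesis by (simp add: S_def)
    qed
    have vol_s': "vol' {a\<in>C. s' a > 0} \<le> vol' C / 2"
    proof -
      have "vol' {a\<in>C. s' a > 0} \<le> vol' S" using sub SC CV by (intro vol'_mono) auto
      thus ?thesis using less.prems(2) by (simp add: S_def)
    qed
    have IH: "2 * \<phi> * (\<Sum>a\<in>C. d a * s' a) \<le> (\<Sum>a\<in>C. \<Sum>b\<in>C. if E a b then \<bar>s' a - s' b\<bar> else 0)"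
      using less.hyps[OF cardlt s'nn vol_s'] by blast
    have sout: "\<And>a. a \<in> C \<Longrightarrow> a \<notin> S \<Longrightarrow> s a = 0" using less.prems(1) by (force simp: S_def)
    define ind where "ind = (\<lambda>a. if a \<in> S then 1 else (0::real))"
    have pw: "\<bar>s a - s b\<bar> = \<bar>s' a - s' b\<bar> + m * \<bar>ind a - ind b\<bar>" if "a \<in> C" "b \<in> C" for a b
      using that sout[of a] sout[of b] mle[of a] mle[of b] mpos
      by (cases "a \<in> S"; cases "b \<in> S") (auto simp: s'_def ind_def)
    have "(\<Sum>a\<in>C. \<Sum>b\<in>C. if E a b then \<bar>s a - s b\<bar> else 0)
        = (\<Sum>a\<in>C. \<Sum>b\<in>C. (if E a b then \<bar>s' a - s' b\<bar> else 0) + m * (if E a b then \<bar>ind a - ind b\<bar> else 0))"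
      by (intro sum.cong refl) (auto simp: pw)
    also have "\<dots> = (\<Sum>a\<in>C. \<Sum>b\<in>C. if E a b then \<bar>s' a - s' b\<bar> else 0) + m * (\<Sum>a\<in>C. \<Sum>b\<in>C. if E a b then \<bar>ind a - ind b\<bar> else 0)"
      by (simp add: sum.distrib sum_distrib_left)
    also have "(\<Sum>a\<in>C. \<Sum>b\<in>C. if E a b then \<bar>ind a - ind b\<bar> else 0) = 2 * cutc S C"
      using cut_count[OF CV SC] unfolding ind_def .
    finally have R: "(\<Sum>a\<in>C. \<Sum>b\<in>C. if E a b then \<bar>s a - s b\<bar> else 0)
        = (\<Sum>a\<in>C. \<Sum>b\<in>C. if E a b then \<bar>s' a - s' b\<bar> else 0) + m * (2 * cutc S C)" .
    have "(\<Sum>a\<in>C. d a * s a) = (\<Sum>a\<in>C. d a * s' a + m * (d a * ind a))"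
      by (intro sum.cong refl) (auto simp: s'_def ind_def sout algebra_simps)
    also have "\<dots> = (\<Sum>a\<in>C. d a * s' a) + m * vol' S"
    proof -
      have "(\<Sum>a\<in>C. d a * ind a) = (\<Sum>a\<in>C. if a \<in> S then d a else 0)"
        by (intro sum.cong) (auto simp: ind_def)
      also have "\<dots> = sum d (C \<inter> S)" by (rule sum.inter_restrict[OF fC, symmetric])
      also have "C \<inter> S = S" using SC by blast
      finally have "(\<Sum>a\<in>C. d a * ind a) = (\<Sum>a\<in>S. d a)" by simp
      thus ?thesis by (simp add: sum.distrib sum_distrib_left[symmetric] vol'_def)
    qed
    finally have L: "(\<Sum>a\<in>C. d a * s a) = (\<Sum>a\<in>C. d a * s' a) + m * vol' S" .
    have volS: "vol' S \<le> vol' C / 2" using less.prems(2) by (simp add: S_def)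
    have cut: "cutc S C \<ge> \<phi> * vol' S" by (rule hC[OF SC False volS])
    have "2 * \<phi> * (\<Sum>a\<in>C. d a * s a) = 2 * \<phi> * (\<Sum>a\<in>C. d a * s' a) + m * (2 * (\<phi> * vol' S))"
      unfolding L by (simp add: algebra_simps)
    also have "\<dots> \<le> (\<Sum>a\<in>C. \<Sum>b\<in>C. if E a b then \<bar>s' a - s' b\<bar> else 0) + m * (2 * cutc S C)"
      using IH cut mpos by (intro add_mono mult_left_mono) auto
    finally show ?thesis using R by simp
  qed
qed


lemma half:
  assumes CV: "C \<subseteq> V" and phi: "\<phi> \<ge> 0"
    and hC: "\<And>S. S \<subseteq> C \<Longrightarrow> S \<noteq> {} \<Longrightarrow> vol' S \<le> vol' C / 2 \<Longrightarrow> cutc S C \<ge> \<phi> * vol' S"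
    and gnn: "\<And>a. a \<in> C \<Longrightarrow> g a \<ge> 0"
    and gvol: "vol' {a\<in>C. g a > 0} \<le> vol' C / 2"
  shows "\<phi>^2 * (\<Sum>a\<in>C. d a * (g a)^2) \<le> QC C g"
proof -
  have fC: "finite C" using CV finV finite_subset by auto
  define R where "R = (\<Sum>a\<in>C. d a * (g a)^2)"
  define A where "A = (\<Sum>a\<in>C. \<Sum>b\<in>C. if E a b then \<bar>(g a)^2 - (g b)^2\<bar> else 0)"
  define B where "B = (\<Sum>a\<in>C. \<Sum>b\<in>C. if E a b then (g a + g b)^2 else 0)"
  have Rnn: "R \<ge> 0" unfolding R_def using CV by (intro sum_nonneg mult_nonneg_nonneg) (auto intro: d_nonneg)
  have QCnn: "QC C g \<ge> 0" unfolding QC_def by (intro sum_nonneg) auto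
  have "{a\<in>C. (g a)^2 > 0} = {a\<in>C. g a > 0}" using gnn by (force simp: less_le)
  hence svol: "vol' {a\<in>C. (\<lambda>a. (g a)^2) a > 0} \<le> vol' C / 2" using gvol by simp
  have coa: "2 * \<phi> * R \<le> A"
    using coarea[OF CV phi hC, of "\<lambda>a. (g a)^2"] svol unfolding R_def A_def by auto
  have A_eq: "A = (\<Sum>a\<in>C. \<Sum>b\<in>C. (if E a b then \<bar>g a - g b\<bar> else 0) * (if E a b then \<bar>g a + g b\<bar> else 0))"
    unfolding A_def
    by (intro sum.cong refl) (auto simp: abs_mult[symmetric] power2_eq_square algebra_simps)
  have "A^2 \<le> (\<Sum>a\<in>C. \<Sum>b\<in>C. (if E a b then \<bar>g a - g b\<bar> else 0)^2) * (\<Sum>a\<in>C. \<Sum>b\<in>C. (if E a b then \<bar>g a + g b\<bar> else 0)^2)"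
    unfolding A_eq by (rule cs2)
  also have "(\<Sum>a\<in>C. \<Sum>b\<in>C. (if E a b then \<bar>g a - g b\<bar> else 0)^2) = QC C g"
    unfolding QC_def by (intro sum.cong refl) auto
  also have "(\<Sum>a\<in>C. \<Sum>b\<in>C. (if E a b then \<bar>g a + g b\<bar> else 0)^2) = B"
    unfolding B_def by (intro sum.cong refl) auto
  finally have AB: "A^2 \<le> QC C g * B" .
  have degC: "(\<Sum>b\<in>C. if E a b then 1 else 0) \<le> d a" if "a \<in> C" for a
  proof -
    have "(\<Sum>b\<in>C. if E a b then 1 else (0::real)) \<le> (\<Sum>b\<in>V. if E a b then 1 else 0)"
      by (rule sum_mono2[OF finV CV]) auto
    thus ?thesis using deg_sum[of a] that CV by auto
  qed
  have B1: "(\<Sum>a\<in>C. \<Sum>b\<in>C. if E a b then (g a)^2 else 0) \<le> R"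
  proof -
    have "(\<Sum>a\<in>C. \<Sum>b\<in>C. if E a b then (g a)^2 else 0) = (\<Sum>a\<in>C. (g a)^2 * (\<Sum>b\<in>C. if E a b then 1 else 0))"
      by (simp add: sum_distrib_left if_distrib cong: if_cong)
    also have "\<dots> \<le> (\<Sum>a\<in>C. (g a)^2 * d a)"
      by (intro sum_mono mult_left_mono degC) auto
    finally show ?thesis unfolding R_def by (simp add: mult.commute)
  qed
  have B2: "(\<Sum>a\<in>C. \<Sum>b\<in>C. if E a b then (g b)^2 else 0) \<le> R"
  proof -
    have "(\<Sum>a\<in>C. \<Sum>b\<in>C. if E a b then (g b)^2 else 0) = (\<Sum>b\<in>C. \<Sum>a\<in>C. if E a b then (g b)^2 else 0)"
      by (rule sum.swap)
    also have "\<dots> = (\<Sum>b\<in>C. \<Sum>a\<in>C. if E b a then (g b)^2 else 0)"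
      by (intro sum.cong refl) (metis Esym)
    finally show ?thesis using B1 by simp
  qed
  have "B \<le> (\<Sum>a\<in>C. \<Sum>b\<in>C. 2 * (if E a b then (g a)^2 else 0) + 2 * (if E a b then (g b)^2 else 0))"
    unfolding B_def
  proof (intro sum_mono)
    fix a b
    have "(g a + g b)^2 \<le> 2 * (g a)^2 + 2 * (g b)^2"
      using zero_le_power2[of "g a - g b"] unfolding power2_diff power2_sum by linarith
    thus "(if E a b then (g a + g b)^2 else 0) \<le> 2 * (if E a b then (g a)^2 else 0) + 2 * (if E a b then (g b)^2 else 0)"
      by auto
  qed
  also have "\<dots> = 2 * (\<Sum>a\<in>C. \<Sum>b\<in>C. if E a b then (g a)^2 else 0) + 2 * (\<Sum>a\<in>C. \<Sum>b\<in>C. if E a b then (g b)^2 else 0)"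
    by (simp add: sum.distrib sum_distrib_left)
  finally have B4: "B \<le> 4 * R" using B1 B2 by linarith
  have "(2 * \<phi> * R)^2 \<le> A^2"
    using coa phi Rnn by (intro power_mono) auto
  also have "\<dots> \<le> QC C g * B" by (rule AB)
  also have "\<dots> \<le> QC C g * (4 * R)" using B4 QCnn by (intro mult_left_mono) auto
  finally have key: "4 * R * (\<phi>^2 * R) \<le> 4 * R * QC C g" by (simp add: power_mult_distrib algebra_simps power2_eq_square)
  show ?thesis
  proof (cases "R = 0")
    case True thus ?thesis using QCnn unfolding R_def by simp
  next
    case False
    hence "R > 0" using Rnn by simp
    hence "\<phi>^2 * R \<le> QC C g" using key by (simp add: mult_le_cancel_left_pos)
    thus ?thesis unfolding R_def .
  qed
qed


lemma vol'_split: "finite C \<Longrightarrow> vol' {a\<in>C. P a} + vol' {a\<in>C. \<not> P a} = vol' C"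
proof -
  assume fC: "finite C"
  have "vol' ({a\<in>C. P a} \<union> {a\<in>C. \<not> P a}) = vol' {a\<in>C. P a} + vol' {a\<in>C. \<not> P a}"
    unfolding vol'_def by (rule sum.union_disjoint) (use fC in auto)
  moreover have "{a\<in>C. P a} \<union> {a\<in>C. \<not> P a} = C" by auto
  ultimately show ?thesis by simp
qed

lemma median:
  fixes y :: "'a \<Rightarrow> real"
  assumes CV: "C \<subseteq> V" and Cne: "C \<noteq> {}"
  shows "\<exists>c. vol' {a\<in>C. y a > c} \<le> vol' C / 2 \<and> vol' {a\<in>C. y a < c} \<le> vol' C / 2"
proof -
  have fC: "finite C" using CV finV finite_subset by auto
  have vC: "vol' C \<ge> 0" using vol'_nonneg CV by auto
  define T where "T = {c \<in> y ` C. vol' {a\<in>C. y a \<le> c} \<ge> vol' C / 2}"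
  have fT: "finite T" unfolding T_def using fC by auto
  have "Max (y ` C) \<in> T"
  proof -
    have "Max (y ` C) \<in> y ` C" using fC Cne by (intro Max_in) auto
    moreover have "{a\<in>C. y a \<le> Max (y ` C)} = C" using fC by auto
    ultimately show ?thesis unfolding T_def using vC by auto
  qed
  hence Tne: "T \<noteq> {}" by auto
  define c where "c = Min T"
  have cT: "c \<in> T" unfolding c_def using fT Tne by (rule Min_in)
  have minT: "\<And>c'. c' \<in> T \<Longrightarrow> c \<le> c'" unfolding c_def using fT by auto
  have g: "vol' {a\<in>C. y a > c} \<le> vol' C / 2"
  proof -
    have "vol' {a\<in>C. y a > c} + vol' {a\<in>C. \<not> y a > c} = vol' C" by (rule vol'_split[OF fC])
    moreover have "{a\<in>C. \<not> y a > c} = {a\<in>C. y a \<le> c}" by auto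
    ultimately show ?thesis using cT unfolding T_def by auto
  qed
  have l: "vol' {a\<in>C. y a < c} \<le> vol' C / 2"
  proof (rule ccontr)
    assume big: "\<not> ?thesis"
    define L where "L = {a\<in>C. y a < c}"
    have "L \<noteq> {}"
    proof
      assume "L = {}"
      hence e: "{a\<in>C. y a < c} = {}" unfolding L_def by simp
      have "vol' {a\<in>C. y a < c} = 0" unfolding e vol'_def by simp
      thus False using big vC by simp
    qed
    have fL: "finite L" unfolding L_def using fC by auto
    define c1 where "c1 = Max (y ` L)"
    have c1L: "c1 \<in> y ` L" unfolding c1_def using fL \<open>L \<noteq> {}\<close> by (intro Max_in) auto
    hence c1c: "c1 < c" unfolding L_def by auto
    have "L \<subseteq> {a\<in>C. y a \<le> c1}" unfolding c1_def using fL by (auto simp: L_def)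
    hence "vol' L \<le> vol' {a\<in>C. y a \<le> c1}" using CV by (intro vol'_mono) auto
    hence "c1 \<in> T" using big c1L unfolding T_def L_def by auto
    with minT c1c show False by fastforce
  qed
  from g l show ?thesis by blast
qed

lemma cluster:
  assumes CV: "C \<subseteq> V" and phi: "\<phi> \<ge> 0"
    and hC: "\<And>S. S \<subseteq> C \<Longrightarrow> S \<noteq> {} \<Longrightarrow> vol' S \<le> vol' C / 2 \<Longrightarrow> cutc S C \<ge> \<phi> * vol' S"
    and sum0: "(\<Sum>a\<in>C. d a * y a) = 0"
  shows "\<phi>^2 * (\<Sum>a\<in>C. d a * (y a)^2) \<le> QC C y"
proof (cases "C = {}")
  case True thus ?thesis by (simp add: QC_def)
next
  case False
  have fC: "finite C" using CV finV finite_subset by auto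
  obtain c where c: "vol' {a\<in>C. y a > c} \<le> vol' C / 2" "vol' {a\<in>C. y a < c} \<le> vol' C / 2"
    using median[OF CV False] by blast
  define zp where "zp = (\<lambda>a. max (y a - c) 0)"
  define zm where "zm = (\<lambda>a. max (c - y a) 0)"
  have "{a\<in>C. zp a > 0} = {a\<in>C. y a > c}" by (auto simp: zp_def)
  hence hp: "\<phi>^2 * (\<Sum>a\<in>C. d a * (zp a)^2) \<le> QC C zp"
    using c(1) by (intro half[OF CV phi hC]) (auto simp: zp_def)
  have "{a\<in>C. zm a > 0} = {a\<in>C. y a < c}" by (auto simp: zm_def)
  hence hm: "\<phi>^2 * (\<Sum>a\<in>C. d a * (zm a)^2) \<le> QC C zm"
    using c(2) by (intro half[OF CV phi hC]) (auto simp: zm_def)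
  have pw: "(zp a - zp b)^2 + (zm a - zm b)^2 \<le> (y a - y b)^2" for a b
  proof -
    have "(max p 0 - max q 0)^2 + (max (-p) 0 - max (-q) 0)^2 \<le> (p - q)^2" for p q :: real
    proof (cases "p \<ge> 0"; cases "q \<ge> 0")
      assume "p \<ge> 0" "\<not> q \<ge> 0"
      hence "0 \<le> p * (-q)" by (intro mult_nonneg_nonneg) auto
      thus ?thesis using \<open>p \<ge> 0\<close> \<open>\<not> q \<ge> 0\<close> by (simp add: max_def power2_eq_square algebra_simps)
    next
      assume "\<not> p \<ge> 0" "q \<ge> 0"
      hence "0 \<le> (-p) * q" by (intro mult_nonneg_nonneg) auto
      thus ?thesis using \<open>\<not> p \<ge> 0\<close> \<open>q \<ge> 0\<close> by (simp add: max_def power2_eq_square algebra_simps)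
    qed (auto simp: max_def power2_eq_square algebra_simps)
    from this[of "y a - c" "y b - c"] show ?thesis by (simp add: zp_def zm_def)
  qed
  have Q: "QC C zp + QC C zm \<le> QC C y"
    unfolding QC_def sum.distrib[symmetric] using pw by (intro sum_mono) auto
  have "(\<Sum>a\<in>C. d a * (y a)^2) \<le> (\<Sum>a\<in>C. d a * (y a)^2) + c^2 * vol' C"
    using vol'_nonneg[OF CV] by simp
  also have "\<dots> = (\<Sum>a\<in>C. d a * (y a - c)^2)"
  proof -
    have "(\<Sum>a\<in>C. d a * (y a - c)^2) = (\<Sum>a\<in>C. d a * (y a)^2 - 2 * c * (d a * y a) + c^2 * d a)"
      by (intro sum.cong refl) (simp add: power2_diff algebra_simps)
    also have "\<dots> = (\<Sum>a\<in>C. d a * (y a)^2) - 2 * c * (\<Sum>a\<in>C. d a * y a) + c^2 * vol' C"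
      by (simp add: sum.distrib sum_subtractf sum_distrib_left vol'_def)
    finally show ?thesis using sum0 by simp
  qed
  also have "\<dots> = (\<Sum>a\<in>C. d a * (zp a)^2) + (\<Sum>a\<in>C. d a * (zm a)^2)"
    unfolding sum.distrib[symmetric]
    by (intro sum.cong refl) (auto simp: zp_def zm_def max_def power2_eq_square algebra_simps)
  finally have "\<phi>^2 * (\<Sum>a\<in>C. d a * (y a)^2) \<le> \<phi>^2 * ((\<Sum>a\<in>C. d a * (zp a)^2) + (\<Sum>a\<in>C. d a * (zm a)^2))"
    by (intro mult_left_mono) auto
  also have "\<dots> \<le> QC C zp + QC C zm" using hp hm by (simp add: algebra_simps)
  finally show ?thesis using Q by linarith
qed

end


context gr begin

definition Fq :: "('a \<Rightarrow> real) \<Rightarrow> real" where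
  "Fq x = (\<Sum>v\<in>V. \<Sum>w\<in>V. x v * K v w * x w)"

lemma Fq_ip: "Fq x = ip x (Nop x)" unfolding Fq_def ip_Nop ..

lemma Fq_cong: "(\<And>v. v \<in> V \<Longrightarrow> x v = y v) \<Longrightarrow> Fq x = Fq y"
  unfolding Fq_def by (intro sum.cong refl) auto

lemma ip_cong: "(\<And>v. v \<in> V \<Longrightarrow> x v = x' v) \<Longrightarrow> (\<And>v. v \<in> V \<Longrightarrow> y v = y' v) \<Longrightarrow> ip x y = ip x' y'"
  unfolding ip_def by (intro sum.cong refl) auto

lemma Fq_scale: "Fq (\<lambda>v. c * x v) = c^2 * Fq x"
  unfolding Fq_def by (simp add: sum_distrib_left power2_eq_square algebra_simps)

lemma nsq_scale: "nsq (\<lambda>v. c * x v) = c^2 * nsq x"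
  unfolding nsq_def ip_def by (simp add: sum_distrib_left power2_eq_square algebra_simps)

lemma ip_scale: "ip (\<lambda>v. c * x v) y = c * ip x y"
  unfolding ip_def by (simp add: sum_distrib_left algebra_simps)

lemma nsq_nonneg: "nsq x \<ge> 0" unfolding nsq_def ip_def by (intro sum_nonneg) auto

lemma nsq_zero: "nsq x = 0 \<Longrightarrow> v \<in> V \<Longrightarrow> x v = 0"
  unfolding nsq_def ip_def using finV by (subst (asm) sum_nonneg_eq_0_iff) auto

lemma maximizer:
  fixes vs :: "nat \<Rightarrow> 'a \<Rightarrow> real"
  assumes ex: "vecV x0" "\<forall>j<m. ip x0 (vs j) = 0" "nsq x0 \<noteq> 0"
  shows "\<exists>v. vecV v \<and> (\<forall>j<m. ip v (vs j) = 0) \<and> nsq v = 1 \<and> Fq x0 \<le> Fq v * nsq x0 \<and>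
    (\<forall>x. vecV x \<and> (\<forall>j<m. ip x (vs j) = 0) \<longrightarrow> Fq x \<le> Fq v * nsq x)"
proof -
  define X where "X = product_topology (\<lambda>_. euclideanreal) V"
  define H where "H = (\<lambda>x::'a\<Rightarrow>real. ((\<Sum>v\<in>V. x v * x v) - 1)^2 + (\<Sum>j<m. (\<Sum>v\<in>V. x v * vs j v)^2))"
  define Kc where "Kc = {x \<in> topspace X. H x \<in> {0}}"
  have proj: "v \<in> V \<Longrightarrow> continuous_map X euclideanreal (\<lambda>x. x v)" for v
    unfolding X_def by (rule continuous_map_product_projection)
  have contH: "continuous_map X euclideanreal H"
    unfolding H_def
    by (intro continuous_intros proj finV) auto
  have contF: "continuous_map X euclideanreal Fq"
    unfolding Fq_def
    by (intro continuous_intros proj finV) auto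
  have closedK: "closedin X Kc"
    unfolding Kc_def by (rule closedin_continuous_map_preimage[OF contH]) simp
  have H0: "H x = 0 \<longleftrightarrow> (\<Sum>v\<in>V. x v * x v) = 1 \<and> (\<forall>j<m. (\<Sum>v\<in>V. x v * vs j v) = 0)" for x
  proof -
    have "H x = 0 \<longleftrightarrow> ((\<Sum>v\<in>V. x v * x v) - 1)^2 = 0 \<and> (\<Sum>j<m. (\<Sum>v\<in>V. x v * vs j v)^2) = 0"
      unfolding H_def by (intro add_nonneg_eq_0_iff) (auto intro: sum_nonneg)
    also have "(\<Sum>j<m. (\<Sum>v\<in>V. x v * vs j v)^2) = 0 \<longleftrightarrow> (\<forall>j<m. (\<Sum>v\<in>V. x v * vs j v) = 0)"
      by (subst sum_nonneg_eq_0_iff) auto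
    finally show ?thesis by simp
  qed
  have topX: "topspace X = PiE V (\<lambda>_. UNIV)" unfolding X_def by simp
  have Ksub: "Kc \<subseteq> PiE V (\<lambda>_. {-1..1})"
  proof
    fix x assume xK: "x \<in> Kc"
    hence sq: "(\<Sum>v\<in>V. x v * x v) = 1" and xT: "x \<in> PiE V (\<lambda>_. UNIV)"
      using H0 topX unfolding Kc_def by auto
    have "x v \<in> {-1..1}" if v: "v \<in> V" for v
    proof -
      have "x v * x v \<le> (\<Sum>v\<in>V. x v * x v)"
        using v finV by (intro member_le_sum) auto
      hence "(x v)^2 \<le> 1^2" using sq by (simp add: power2_eq_square)
      hence "\<bar>x v\<bar> \<le> 1" using abs_le_square_iff by (metis abs_one)
      thus ?thesis by auto
    qed
    thus "x \<in> PiE V (\<lambda>_. {-1..1})" using xT by (auto simp: PiE_def extensional_def)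
  qed
  have compBox: "compactin X (PiE V (\<lambda>_. {-1..1::real}))"
    unfolding X_def by (subst compactin_PiE) auto
  have compK: "compactin X Kc" by (rule closed_compactin[OF compBox Ksub closedK])
  define s where "s = 1 / sqrt (nsq x0)"
  have n0: "nsq x0 > 0" using ex(3) nsq_nonneg[of x0] by simp
  define y0 where "y0 = restrict (\<lambda>v. s * x0 v) V"
  have y0K: "y0 \<in> Kc"
  proof -
    have "(\<Sum>v\<in>V. y0 v * y0 v) = nsq (\<lambda>v. s * x0 v)"
      unfolding nsq_def ip_def y0_def by (intro sum.cong refl) auto
    also have "\<dots> = s^2 * nsq x0" by (rule nsq_scale)
    also have "\<dots> = 1" using n0 by (simp add: s_def power_divide)
    finally have a: "(\<Sum>v\<in>V. y0 v * y0 v) = 1" .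
    have b: "(\<Sum>v\<in>V. y0 v * vs j v) = 0" if "j < m" for j
    proof -
      have "(\<Sum>v\<in>V. y0 v * vs j v) = ip (\<lambda>v. s * x0 v) (vs j)"
        unfolding ip_def y0_def by (intro sum.cong refl) auto
      thus ?thesis using ex(2) that by (simp add: ip_scale)
    qed
    show ?thesis unfolding Kc_def using a b H0 topX by (auto simp: y0_def)
  qed
  have "compactin euclideanreal (Fq ` Kc)" by (rule image_compactin[OF compK contF])
  hence "compact (Fq ` Kc)" by simp
  moreover have "Fq ` Kc \<noteq> {}" using y0K by auto
  ultimately obtain lam where lam: "lam \<in> Fq ` Kc" "\<forall>z\<in>Fq ` Kc. z \<le> lam"
    using compact_attains_sup by blast
  then obtain v0 where v0: "v0 \<in> Kc" "Fq v0 = lam" by auto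
  define v where "v = (\<lambda>a. if a \<in> V then v0 a else 0)"
  have vV: "vecV v" by (simp add: vecV_def v_def)
  have v0H: "(\<Sum>a\<in>V. v0 a * v0 a) = 1 \<and> (\<forall>j<m. (\<Sum>a\<in>V. v0 a * vs j a) = 0)"
    using v0(1) H0 unfolding Kc_def by auto
  have vn: "nsq v = 1" using v0H unfolding nsq_def ip_def v_def by simp
  have vo: "\<forall>j<m. ip v (vs j) = 0" using v0H unfolding ip_def v_def by simp
  have Fv: "Fq v = lam" using v0(2) by (subst Fq_cong[of v v0]) (auto simp: v_def)
  have main: "Fq x \<le> lam * nsq x" if x: "vecV x" "\<forall>j<m. ip x (vs j) = 0" for x
  proof (cases "nsq x = 0")
    case True
    hence "Fq x = Fq (\<lambda>_. 0)" using nsq_zero by (intro Fq_cong) auto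
    thus ?thesis using True by (simp add: Fq_def)
  next
    case False
    have nx: "nsq x > 0" using False nsq_nonneg[of x] by simp
    define t where "t = 1 / sqrt (nsq x)"
    define y where "y = restrict (\<lambda>v. t * x v) V"
    have yK: "y \<in> Kc"
    proof -
      have "(\<Sum>v\<in>V. y v * y v) = nsq (\<lambda>v. t * x v)"
        unfolding nsq_def ip_def y_def by (intro sum.cong refl) auto
      also have "\<dots> = t^2 * nsq x" by (rule nsq_scale)
      also have "\<dots> = 1" using nx by (simp add: t_def power_divide)
      finally have a: "(\<Sum>v\<in>V. y v * y v) = 1" .
      have b: "(\<Sum>v\<in>V. y v * vs j v) = 0" if "j < m" for j
      proof -
        have "(\<Sum>v\<in>V. y v * vs j v) = ip (\<lambda>v. t * x v) (vs j)"
          unfolding ip_def y_def by (intro sum.cong refl) auto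
        thus ?thesis using x(2) that by (simp add: ip_scale)
      qed
      show ?thesis unfolding Kc_def using a b H0 topX by (auto simp: y_def)
    qed
    hence "Fq y \<le> lam" using lam by auto
    moreover have "Fq y = t^2 * Fq x"
      by (subst Fq_cong[of y "\<lambda>v. t * x v"]) (auto simp: y_def Fq_scale)
    ultimately have "Fq x / nsq x \<le> lam" using nx by (simp add: t_def power_divide)
    thus ?thesis using nx by (simp add: divide_le_eq mult.commute)
  qed
  have "Fq x0 \<le> lam * nsq x0" by (rule main[OF ex(1,2)])
  thus ?thesis using vV vo vn main Fv by (intro exI[of _ v]) (auto simp: mult.commute)
qed


lemma ip_lin: "ip (\<lambda>a. p * x a + q * y a) z = p * ip x z + q * ip y z"
  unfolding ip_def by (simp add: sum.distrib sum_distrib_left algebra_simps)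

lemma ip_sum_left: "ip (\<lambda>a. \<Sum>j\<in>J. c j * f j a) z = (\<Sum>j\<in>J. c j * ip (f j) z)"
  unfolding ip_def by (simp add: sum_distrib_left sum_distrib_right sum.swap[of _ V] algebra_simps)

lemma Nop_lin: "Nop (\<lambda>a. p * x a + q * y a) = (\<lambda>a. p * Nop x a + q * Nop y a)"
  unfolding Nop_def by (auto simp: sum.distrib sum_distrib_left algebra_simps)

lemma Nop_sum: "Nop (\<lambda>a. \<Sum>j\<in>J. c j * f j a) = (\<lambda>a. \<Sum>j\<in>J. c j * Nop (f j) a)"
  unfolding Nop_def by (auto simp: sum_distrib_left sum.swap[of _ V] algebra_simps)

lemma Nop_vecV: "vecV (Nop x)" unfolding vecV_def Nop_def by auto

lemma Fq_expand: "Fq (\<lambda>a. x a + t * y a) = Fq x + 2 * t * ip x (Nop y) + t^2 * Fq y"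
proof -
  have "Fq (\<lambda>a. x a + t * y a) = (\<Sum>v\<in>V. \<Sum>w\<in>V. x v * K v w * x w + t * (x v * K v w * y w) + t * (y v * K v w * x w) + t^2 * (y v * K v w * y w))"
    unfolding Fq_def by (intro sum.cong refl) (simp add: algebra_simps power2_eq_square)
  also have "\<dots> = Fq x + t * ip x (Nop y) + t * ip y (Nop x) + t^2 * Fq y"
    unfolding Fq_def ip_Nop by (simp add: sum.distrib sum_distrib_left)
  also have "ip y (Nop x) = ip x (Nop y)" using Nop_sym[of x y] ip_sym by metis
  finally show ?thesis by simp
qed

lemma nsq_expand: "nsq (\<lambda>a. x a + t * y a) = nsq x + 2 * t * ip x y + t^2 * nsq y"
  unfolding nsq_def ip_def
  by (simp add: sum.distrib sum_distrib_left power2_eq_square algebra_simps)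

lemma eigen_of_max:
  fixes vs :: "nat \<Rightarrow> 'a \<Rightarrow> real"
  assumes fam: "\<forall>j<m. vecV (vs j) \<and> Nop (vs j) = (\<lambda>a. lam j * vs j a)"
    and v: "vecV v" "\<forall>j<m. ip v (vs j) = 0" "nsq v = 1"
    "\<forall>x. vecV x \<and> (\<forall>j<m. ip x (vs j) = 0) \<longrightarrow> Fq x \<le> Fq v * nsq x"
  shows "Nop v = (\<lambda>a. Fq v * v a)"
proof -
  define l where "l = Fq v"
  have orth0: "l * ip v y - ip v (Nop y) = 0" if y: "vecV y" "\<forall>j<m. ip y (vs j) = 0" for y
  proof -
    have "(l * ip v y - ip v (Nop y))^2 \<le> (l * nsq v - Fq v) * (l * nsq y - Fq y)"
    proof (rule quad_disc)
      fix t :: real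
      have inS: "vecV (\<lambda>a. v a + t * y a) \<and> (\<forall>j<m. ip (\<lambda>a. v a + t * y a) (vs j) = 0)"
        using v y ip_lin[of 1 v t y] by (auto simp: vecV_def)
      hence "Fq (\<lambda>a. v a + t * y a) \<le> l * nsq (\<lambda>a. v a + t * y a)" using v(4) l_def by auto
      thus "0 \<le> (l * nsq v - Fq v) + 2 * (l * ip v y - ip v (Nop y)) * t + (l * nsq y - Fq y) * t^2"
        unfolding Fq_expand nsq_expand by (simp add: algebra_simps)
    next
      show "0 \<le> l * nsq y - Fq y" using v(4) y l_def by auto
    qed
    also have "l * nsq v - Fq v = 0" using v(3) l_def by simp
    finally show ?thesis by simp
  qed
  define w where "w = (\<lambda>a. l * v a + (-1) * Nop v a)"
  have wV: "vecV w" using v(1) Nop_vecV unfolding w_def vecV_def by auto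
  have ipw: "ip w y = l * ip v y - ip v (Nop y)" for y
    unfolding w_def ip_lin using Nop_sym[of v y] by simp
  have wo: "\<forall>j<m. ip w (vs j) = 0"
  proof (intro allI impI)
    fix j assume j: "j < m"
    have "ip v (Nop (vs j)) = ip v (\<lambda>a. lam j * vs j a + 0 * vs j a)" using fam j by simp
    also have "\<dots> = lam j * ip (vs j) v" unfolding ip_sym[of v] ip_lin by simp
    also have "\<dots> = 0" using v(2) j ip_sym[of "vs j" v] by simp
    finally show "ip w (vs j) = 0" unfolding ipw using v(2) j by simp
  qed
  have "ip w w = 0" using orth0[OF wV wo] ipw by simp
  hence w0: "\<And>a. a \<in> V \<Longrightarrow> w a = 0" using nsq_zero unfolding nsq_def by blast
  show ?thesis
  proof
    fix a show "Nop v a = Fq v * v a"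
    proof (cases "a \<in> V")
      case True thus ?thesis using w0[of a] unfolding w_def l_def by simp
    next
      case False thus ?thesis using v(1) Nop_vecV unfolding vecV_def by simp
    qed
  qed
qed

end


context gr begin

definition orth :: "nat \<Rightarrow> (nat \<Rightarrow> 'a \<Rightarrow> real) \<Rightarrow> bool" where
  "orth m vs \<longleftrightarrow> (\<forall>i<m. \<forall>j<m. ip (vs i) (vs j) = (if i = j then 1 else 0))"
definition fam :: "real \<Rightarrow> nat \<Rightarrow> (nat \<Rightarrow> 'a \<Rightarrow> real) \<Rightarrow> (nat \<Rightarrow> real) \<Rightarrow> bool" where
  "fam r m vs lam \<longleftrightarrow> (\<forall>j<m. vecV (vs j) \<and> Nop (vs j) = (\<lambda>a. lam j * vs j a) \<and> lam j > r) \<and> orth m vs"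
definition inS :: "nat \<Rightarrow> (nat \<Rightarrow> 'a \<Rightarrow> real) \<Rightarrow> ('a \<Rightarrow> real) \<Rightarrow> bool" where
  "inS m vs x \<longleftrightarrow> vecV x \<and> (\<forall>j<m. ip x (vs j) = 0)"
definition termi :: "real \<Rightarrow> nat \<Rightarrow> (nat \<Rightarrow> 'a \<Rightarrow> real) \<Rightarrow> bool" where
  "termi r m vs \<longleftrightarrow> (\<forall>x. inS m vs x \<longrightarrow> Fq x \<le> r * nsq x)"

lemma Fq_zero: "nsq x = 0 \<Longrightarrow> Fq x = 0"
proof -
  assume "nsq x = 0"
  hence "Fq x = Fq (\<lambda>_. 0)" using nsq_zero by (intro Fq_cong) auto
  thus ?thesis by (simp add: Fq_def)
qed

lemma peel_step:
  assumes f: "fam r m vs lam" and nt: "\<not> termi r m vs"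
  shows "\<exists>vs' lam'. fam r (Suc m) vs' lam'"
proof -
  obtain x0 where x0: "inS m vs x0" "Fq x0 > r * nsq x0" using nt unfolding termi_def by force
  have n0: "nsq x0 \<noteq> 0" using x0(2) Fq_zero by force
  have n0': "nsq x0 > 0" using n0 nsq_nonneg[of x0] by simp
  obtain v where v: "vecV v" "\<forall>j<m. ip v (vs j) = 0" "nsq v = 1" "Fq x0 \<le> Fq v * nsq x0"
    "\<forall>x. vecV x \<and> (\<forall>j<m. ip x (vs j) = 0) \<longrightarrow> Fq x \<le> Fq v * nsq x"
    using maximizer[of x0 m vs] x0(1) n0 unfolding inS_def by blast
  have famj: "\<forall>j<m. vecV (vs j) \<and> Nop (vs j) = (\<lambda>a. lam j * vs j a)" using f unfolding fam_def by blast
  have ev: "Nop v = (\<lambda>a. Fq v * v a)" by (rule eigen_of_max[OF famj v(1,2,3,5)])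
  have gt: "Fq v > r"
  proof -
    have "r * nsq x0 < Fq v * nsq x0" using x0(2) v(4) by linarith
    thus ?thesis using n0' by (simp add: mult_less_cancel_right)
  qed
  define vs' where "vs' = vs(m := v)"
  define lam' where "lam' = lam(m := Fq v)"
  have "fam r (Suc m) vs' lam'"
    unfolding fam_def orth_def
  proof (intro conjI allI impI)
    fix j assume j: "j < Suc m"
    show "vecV (vs' j)" "Nop (vs' j) = (\<lambda>a. lam' j * vs' j a)" "lam' j > r"
      using f j v(1) ev gt unfolding fam_def vs'_def lam'_def by (auto simp: less_Suc_eq)
  next
    fix i j assume i: "i < Suc m" and j: "j < Suc m"
    show "ip (vs' i) (vs' j) = (if i = j then 1 else 0)"
    proof (cases "i = m"; cases "j = m")
      assume "i = m" "j = m" thus ?thesis using v(3) by (simp add: vs'_def nsq_def)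
    next
      assume "i = m" "j \<noteq> m" thus ?thesis using v(2) j by (simp add: vs'_def)
    next
      assume "i \<noteq> m" "j = m" thus ?thesis using v(2) i ip_sym by (simp add: vs'_def)
    next
      assume "i \<noteq> m" "j \<noteq> m" thus ?thesis using f i j unfolding fam_def orth_def vs'_def by auto
    qed
  qed
  thus ?thesis by blast
qed

lemma peel: "(\<exists>vs lam. fam r n vs lam) \<or> (\<exists>m<n. \<exists>vs lam. fam r m vs lam \<and> termi r m vs)"
proof (induction n)
  case 0
  have "fam r 0 (\<lambda>_ _. 0) (\<lambda>_. 0)" by (simp add: fam_def orth_def)
  thus ?case by blast
next
  case (Suc n)
  thus ?case
  proof
    assume "\<exists>vs lam. fam r n vs lam"
    then obtain vs lam where f: "fam r n vs lam" by blast
    show ?thesis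
    proof (cases "termi r n vs")
      case True thus ?thesis using f by blast
    next
      case False thus ?thesis using peel_step[OF f] by blast
    qed
  next
    assume "\<exists>m<n. \<exists>vs lam. fam r m vs lam \<and> termi r m vs"
    thus ?thesis using less_SucI by blast
  qed
qed

lemma ip_right_sum: "ip z (\<lambda>a. \<Sum>j\<in>J. c j * f j a) = (\<Sum>j\<in>J. c j * ip z (f j))"
  using ip_sum_left[of c f J z] ip_sym by (metis (no_types, lifting) sum.cong)

lemma ip_orth:
  assumes "orth m vs"
  shows "ip (\<lambda>x. \<Sum>j<m. a j * vs j x) (\<lambda>x. \<Sum>j<m. b j * vs j x) = (\<Sum>j<m. a j * b j)"
proof -
  have "ip (\<lambda>x. \<Sum>j<m. a j * vs j x) (\<lambda>x. \<Sum>j<m. b j * vs j x) = (\<Sum>i<m. a i * ip (vs i) (\<lambda>x. \<Sum>j<m. b j * vs j x))"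
    by (rule ip_sum_left)
  also have "\<dots> = (\<Sum>i<m. a i * b i)"
  proof (rule sum.cong[OF refl])
    fix i assume i: "i \<in> {..<m}"
    have "ip (vs i) (\<lambda>x. \<Sum>j<m. b j * vs j x) = (\<Sum>j<m. b j * ip (vs i) (vs j))" by (rule ip_right_sum)
    also have "\<dots> = (\<Sum>j<m. b j * (if i = j then 1 else 0))"
      using assms i unfolding orth_def by (intro sum.cong refl) auto
    also have "\<dots> = b i" using i by (simp add: if_distrib[of "\<lambda>t. b _ * t"] sum.delta cong: if_cong)
    finally show "a i * ip (vs i) (\<lambda>x. \<Sum>j<m. b j * vs j x) = a i * b i" by simp
  qed
  finally show ?thesis .
qed

lemma count:
  assumes f: "fam r m vs lam" and fW: "finite W"
    and PW: "\<And>x. vecV x \<Longrightarrow> (\<forall>w\<in>W. ip x w = 0) \<Longrightarrow> Fq x \<le> r * nsq x"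
  shows "m \<le> card W"
proof (rule ccontr)
  assume "\<not> m \<le> card W"
  hence lt: "card W < m" by simp
  define F where "F = (\<lambda>w. \<lambda>j. ip (vs j) w) ` W"
  have "card F \<le> card W" unfolding F_def by (rule card_image_le[OF fW])
  hence "card F < card {..<m}" using lt by simp
  from homog_exists[OF _ _ this] fW obtain c where
    c: "\<exists>j\<in>{..<m}. c j \<noteq> 0" "\<forall>a\<in>F. (\<Sum>j<m. a j * c j) = 0" unfolding F_def by auto
  define x where "x = (\<lambda>a. \<Sum>j<m. c j * vs j a)"
  have xV: "vecV x" using f unfolding x_def fam_def vecV_def by auto
  have xW: "\<forall>w\<in>W. ip x w = 0"
  proof
    fix w assume w: "w \<in> W"
    have "ip x w = (\<Sum>j<m. c j * ip (vs j) w)" unfolding x_def by (rule ip_sum_left)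
    also have "\<dots> = 0" using c(2) w unfolding F_def by (auto simp: mult.commute)
    finally show "ip x w = 0" .
  qed
  have orth: "orth m vs" using f unfolding fam_def by blast
  have Nx: "Nop x = (\<lambda>a. \<Sum>j<m. (c j * lam j) * vs j a)"
    unfolding x_def Nop_sum using f unfolding fam_def by (auto intro!: sum.cong)
  have "Fq x = (\<Sum>j<m. c j * (c j * lam j))" unfolding Fq_ip Nx unfolding x_def by (rule ip_orth[OF orth])
  moreover have "nsq x = (\<Sum>j<m. c j * c j)" unfolding nsq_def x_def by (rule ip_orth[OF orth])
  ultimately have "(\<Sum>j<m. c j * (c j * lam j)) \<le> r * (\<Sum>j<m. c j * c j)" using PW[OF xV xW] by simp
  hence le: "(\<Sum>j<m. (lam j - r) * (c j)^2) \<le> 0"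
    by (simp add: sum_distrib_left sum_subtractf algebra_simps power2_eq_square)
  obtain j0 where j0: "j0 < m" "c j0 \<noteq> 0" using c(1) by auto
  have "0 < (\<Sum>j<m. (lam j - r) * (c j)^2)"
  proof (rule sum_pos2[of "{..<m}" j0])
    show "0 < (lam j0 - r) * (c j0)^2" using f j0 unfolding fam_def by auto
    show "0 \<le> (lam j - r) * (c j)^2" if "j \<in> {..<m}" for j
    proof -
      have "lam j - r \<ge> 0" using f that unfolding fam_def by (auto simp: less_imp_le)
      thus ?thesis by simp
    qed
  qed (use j0 in auto)
  with le show False by simp
qed


lemma Nop_add: "Nop (\<lambda>a. x a + y a) = (\<lambda>a. Nop x a + Nop y a)"
  using Nop_lin[of 1 x 1 y] by simp

lemma funpow_add: "(Nop ^^ t) (\<lambda>a. x a + y a) = (\<lambda>a. (Nop ^^ t) x a + (Nop ^^ t) y a)"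
  by (induction t) (auto simp: Nop_add)

lemma funpow_scale: "(Nop ^^ t) (\<lambda>a. c * x a) = (\<lambda>a. c * (Nop ^^ t) x a)"
  using Nop_lin[of c _ 0 _]  by (induction t) auto

lemma funpow_eig:
  assumes f: "fam r m vs lam"
  shows "(Nop ^^ t) (\<lambda>a. \<Sum>j<m. c j * vs j a) = (\<lambda>a. \<Sum>j<m. (c j * lam j ^ t) * vs j a)"
proof (induction t)
  case 0 thus ?case by simp
next
  case (Suc t)
  have "(Nop ^^ Suc t) (\<lambda>a. \<Sum>j<m. c j * vs j a) = Nop (\<lambda>a. \<Sum>j<m. (c j * lam j ^ t) * vs j a)"
    using Suc by simp
  also have "\<dots> = (\<lambda>a. \<Sum>j<m. (c j * lam j ^ t) * Nop (vs j) a)" by (rule Nop_sum)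
  also have "\<dots> = (\<lambda>a. \<Sum>j<m. (c j * lam j ^ Suc t) * vs j a)"
    using f unfolding fam_def by (auto intro!: sum.cong)
  finally show ?case .
qed

lemma contract:
  assumes f: "fam r m vs lam" and tm: "termi r m vs" and r: "r \<ge> 0" and x: "inS m vs x"
  shows "inS m vs (Nop x) \<and> nsq (Nop x) \<le> r^2 * nsq x"
proof
  show S: "inS m vs (Nop x)"
    unfolding inS_def
  proof (intro conjI allI impI Nop_vecV)
    fix j assume j: "j < m"
    have "ip (Nop x) (vs j) = ip x (Nop (vs j))" by (rule Nop_sym)
    also have "\<dots> = ip x (\<lambda>a. lam j * vs j a + 0 * vs j a)" using f j unfolding fam_def by simp
    also have "\<dots> = lam j * ip (vs j) x" unfolding ip_sym[of x] ip_lin by simp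
    also have "\<dots> = 0" using x j ip_sym[of "vs j" x] unfolding inS_def by simp
    finally show "ip (Nop x) (vs j) = 0" .
  qed
  define y where "y = Nop x"
  have cs: "(ip x (Nop y))^2 \<le> Fq x * Fq y"
  proof (rule quad_disc)
    fix t :: real
    have "0 \<le> Fq (\<lambda>a. x a + t * y a)" unfolding Fq_ip by (rule psd)
    thus "0 \<le> Fq x + 2 * ip x (Nop y) * t + Fq y * t^2" unfolding Fq_expand by (simp add: algebra_simps)
  qed (simp add: Fq_ip psd)
  have e1: "ip x (Nop y) = nsq y" unfolding y_def nsq_def using Nop_sym[of x "Nop x"] by simp
  have b1: "Fq x \<le> r * nsq x" using tm x unfolding termi_def by blast
  have b2: "Fq y \<le> r * nsq y" using tm S unfolding termi_def y_def by blast
  have "(nsq y)^2 \<le> (r * nsq x) * (r * nsq y)"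
    using cs e1 b1 b2 by (smt (verit) Fq_ip mult_mono psd)
  hence "nsq y * nsq y \<le> nsq y * (r^2 * nsq x)" by (simp add: power2_eq_square algebra_simps)
  hence "nsq y \<le> r^2 * nsq x" if "nsq y > 0" using that by (simp add: mult_le_cancel_left_pos)
  moreover have "0 \<le> r^2 * nsq x" using nsq_nonneg by simp
  ultimately show "nsq (Nop x) \<le> r^2 * nsq x" using nsq_nonneg[of y] unfolding y_def by force
qed

lemma contract_iter:
  assumes f: "fam r m vs lam" and tm: "termi r m vs" and r: "r \<ge> 0" and x: "inS m vs x"
  shows "inS m vs ((Nop ^^ t) x) \<and> nsq ((Nop ^^ t) x) \<le> (r^2)^t * nsq x"
proof (induction t)
  case 0 thus ?case using x by simp
next
  case (Suc t)
  have c: "inS m vs (Nop ((Nop ^^ t) x)) \<and> nsq (Nop ((Nop ^^ t) x)) \<le> r^2 * nsq ((Nop ^^ t) x)"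
    using contract[OF f tm r] Suc by blast
  have "r^2 * nsq ((Nop ^^ t) x) \<le> r^2 * ((r^2)^t * nsq x)" using Suc by (intro mult_left_mono) auto
  thus ?case using c by simp
qed

lemma ip_ind: "u \<in> V \<Longrightarrow> ip (indicator_vec u) y = y u"
proof -
  assume u: "u \<in> V"
  have "ip (indicator_vec u) y = (\<Sum>v\<in>V. if v = u then y v else 0)"
    unfolding ip_def indicator_vec_def by (rule sum.cong) auto
  also have "\<dots> = y u" using finV u by simp
  finally show ?thesis .
qed

lemma final_bound:
  assumes f: "fam r m vs lam" and tm: "termi r m vs" and r: "r \<ge> 0" and u: "u \<in> V"
  shows "nsq ((Nop ^^ t) (indicator_vec u)) \<le> (\<Sum>j<m. (vs j u)^2) + (r^2)^t"
proof -
  define e where "e = indicator_vec u"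
  define c where "c = (\<lambda>j. vs j u)"
  define p where "p = (\<lambda>a. \<Sum>j<m. c j * vs j a)"
  define q where "q = (\<lambda>a. e a + (-1) * p a)"
  have orth: "orth m vs" using f unfolding fam_def by blast
  have ipp: "ip p (vs i) = c i" if i: "i < m" for i
  proof -
    have "ip p (vs i) = (\<Sum>j<m. c j * ip (vs j) (vs i))" unfolding p_def by (rule ip_sum_left)
    also have "\<dots> = (\<Sum>j<m. c j * (if j = i then 1 else 0))"
      using orth i unfolding orth_def by (intro sum.cong refl) auto
    also have "\<dots> = c i" using i by (simp add: if_distrib[of "\<lambda>t. c _ * t"] sum.delta cong: if_cong)
    finally show ?thesis .
  qed
  have eV: "vecV e" using u unfolding e_def vecV_def indicator_vec_def by auto
  have pV: "vecV p" using f unfolding p_def fam_def vecV_def by auto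
  have qS: "inS m vs q"
    unfolding inS_def
  proof (intro conjI allI impI)
    show "vecV q" using eV pV unfolding q_def vecV_def by auto
    fix i assume i: "i < m"
    have "ip q (vs i) = ip e (vs i) - ip p (vs i)"
      unfolding q_def using ip_lin[of 1 e "-1" p "vs i"] by simp
    also have "\<dots> = 0" using ipp[OF i] ip_ind[OF u] unfolding e_def c_def by simp
    finally show "ip q (vs i) = 0" .
  qed
  have epq: "e = (\<lambda>a. p a + 1 * q a)" unfolding q_def by simp
  have orthS: "ip (\<lambda>a. \<Sum>j<m. b j * vs j a) z = 0" if "inS m vs z" for b z
  proof -
    have "ip (\<lambda>a. \<Sum>j<m. b j * vs j a) z = (\<Sum>j<m. b j * ip (vs j) z)" by (rule ip_sum_left)
    also have "\<dots> = 0" using that ip_sym unfolding inS_def by (metis (no_types, lifting) lessThan_iff mult_zero_right sum.neutral)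
    finally show ?thesis .
  qed
  have nq: "nsq q \<le> 1"
  proof -
    have "nsq e = nsq p + nsq q" unfolding epq nsq_expand using orthS[OF qS, of c] by (simp add: p_def)
    moreover have "nsq e = 1" unfolding nsq_def using ip_ind[OF u, of e] unfolding e_def
      by (simp add: indicator_vec_def)
    ultimately show ?thesis using nsq_nonneg[of p] by simp
  qed
  define A where "A = (\<lambda>a. \<Sum>j<m. (c j * lam j ^ t) * vs j a)"
  define B where "B = (Nop ^^ t) q"
  have "(Nop ^^ t) e = (\<lambda>a. A a + 1 * B a)"
    unfolding epq funpow_add A_def B_def p_def funpow_eig[OF f] by simp
  hence "nsq ((Nop ^^ t) e) = nsq A + 2 * 1 * ip A B + 1^2 * nsq B"
    using nsq_expand[of A 1 B] by simp
  also have "ip A B = 0"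
    using orthS[of B "\<lambda>j. c j * lam j ^ t"] contract_iter[OF f tm r qS, of t]
    unfolding A_def B_def by simp
  finally have "nsq ((Nop ^^ t) e) = nsq A + nsq B" by simp
  also have "nsq A \<le> (\<Sum>j<m. (c j)^2)"
  proof -
    have "nsq A = (\<Sum>j<m. (c j * lam j ^ t) * (c j * lam j ^ t))" unfolding nsq_def A_def by (rule ip_orth[OF orth])
    also have "\<dots> \<le> (\<Sum>j<m. (c j)^2)"
    proof (rule sum_mono)
      fix j assume j: "j \<in> {..<m}"
      have l1: "lam j \<le> 1"
      proof -
        have ev: "Nop (vs j) = (\<lambda>a. lam j * vs j a)" using f j unfolding fam_def by blast
        have "Fq (vs j) = ip (vs j) (\<lambda>a. lam j * vs j a + 0 * vs j a)" unfolding Fq_ip ev by simp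
        also have "\<dots> = lam j" unfolding ip_sym[of "vs j" "\<lambda>a. lam j * vs j a + 0 * vs j a"] ip_lin using orth j unfolding orth_def by simp
        finally have "lam j = Fq (vs j)" by simp
        also have "\<dots> \<le> nsq (vs j)" unfolding Fq_ip by (rule quad_le)
        also have "\<dots> = 1" using orth j unfolding orth_def nsq_def by simp
        finally show ?thesis .
      qed
      have l0: "lam j \<ge> 0" using f j r unfolding fam_def by force
      have "lam j ^ t \<le> 1" using l0 l1 by (simp add: power_le_one)
      moreover have "lam j ^ t \<ge> 0" using l0 by simp
      ultimately have "(lam j ^ t) * (lam j ^ t) \<le> 1" by (simp add: mult_le_one)
      hence "(c j)^2 * ((lam j ^ t) * (lam j ^ t)) \<le> (c j)^2 * 1" by (intro mult_left_mono) auto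
      thus "(c j * lam j ^ t) * (c j * lam j ^ t) \<le> (c j)^2" by (simp add: power2_eq_square algebra_simps)
    qed
    finally show ?thesis .
  qed
  also have "nsq B \<le> (r^2)^t * nsq q" using contract_iter[OF f tm r qS] unfolding B_def by blast
  also have "\<dots> \<le> (r^2)^t" using nq by (simp add: mult_left_le)
  finally show ?thesis unfolding e_def c_def by simp
qed

end


context gr begin

lemma vol_eq: "vol V E S = vol' S" unfolding vol_def vol'_def d_def ..

lemma vol'_pos: "S \<subseteq> V \<Longrightarrow> S \<noteq> {} \<Longrightarrow> vol' S > 0"
  unfolding vol'_def using finV dpos2
  by (intro sum_pos) (auto intro: finite_subset)

lemma hC_from_cond:
  assumes CV: "C \<subseteq> V" and Cne: "C \<noteq> {}" and cnd: "cond V E C \<ge> \<phi>"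
  shows "\<And>S. S \<subseteq> C \<Longrightarrow> S \<noteq> {} \<Longrightarrow> vol' S \<le> vol' C / 2 \<Longrightarrow> cutc S C \<ge> \<phi> * vol' S"
proof -
  fix S assume SC: "S \<subseteq> C" and Sne: "S \<noteq> {}" and Svol: "vol' S \<le> vol' C / 2"
  have fC: "finite C" using CV finV finite_subset by auto
  have vS: "vol' S > 0" using SC CV Sne by (intro vol'_pos) auto
  show "cutc S C \<ge> \<phi> * vol' S"
  proof (cases "card C > 1")
    case True
    define Set where "Set = {cond_in V E C S | S. S \<subseteq> C \<and> 0 < vol V E S \<and> vol V E S \<le> vol V E C / 2}"
    have "Set \<subseteq> (\<lambda>S. cond_in V E C S) ` Pow C" unfolding Set_def by auto
    hence fS: "finite Set" using fC by (meson finite_Pow_iff finite_imageI finite_subset)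
    have mem: "cond_in V E C S \<in> Set" unfolding Set_def using SC vS Svol by (auto simp: vol_eq)
    have "\<phi> \<le> Min Set" using cnd True by (simp add: cond_def Set_def)
    also have "\<dots> \<le> cond_in V E C S" using fS mem by simp
    also have "\<dots> = cutc S C / vol' S" by (simp only: cond_in_def cutc_def cut_edges_def vol_eq)
    finally show ?thesis using vS by (simp add: pos_le_divide_eq mult.commute)
  next
    case False
    moreover have "card C > 0" using Cne fC card_gt_0_iff by blast
    ultimately have "card C = 1" by linarith
    then obtain a where "C = {a}" by (auto simp: card_Suc_eq)
    hence "S = C" using SC Sne by auto
    hence "vol' C \<le> vol' C / 2" using Svol by simp
    moreover have "vol' C > 0" using CV Cne by (intro vol'_pos)
    ultimately show ?thesis by simp
  qed
qed

definition wC :: "'a set \<Rightarrow> 'a \<Rightarrow> real" where "wC C = (\<lambda>a. if a \<in> C then sd a else 0)"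

lemma PW_lemma:
  assumes fP: "finite P" and disj: "\<forall>C\<in>P. \<forall>C'\<in>P. C \<noteq> C' \<longrightarrow> C \<inter> C' = {}"
    and UP: "\<Union>P = V" and ne: "\<forall>C\<in>P. C \<noteq> {}" and phi: "\<phi> > 0"
    and cnd: "\<forall>C\<in>P. cond V E C \<ge> \<phi>"
    and xV: "vecV x" and xW: "\<forall>w\<in>wC ` P. ip x w = 0"
  shows "Fq x \<le> (1 - \<phi>^2 / 4) * nsq x"
proof -
  define y where "y = (\<lambda>a. x a / sd a)"
  have CV: "\<And>C. C \<in> P \<Longrightarrow> C \<subseteq> V" using UP by auto
  have fCs: "\<And>C. C \<in> P \<Longrightarrow> finite C" using CV finV finite_subset by blast
  have pd: "pairwise disjnt P" using disj unfolding pairwise_def disjnt_def by blast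
  have clus: "\<phi>^2 * (\<Sum>a\<in>C. (x a)^2) \<le> QC C y" if C: "C \<in> P" for C
  proof -
    have hC: "\<And>S. S \<subseteq> C \<Longrightarrow> S \<noteq> {} \<Longrightarrow> vol' S \<le> vol' C / 2 \<Longrightarrow> cutc S C \<ge> \<phi> * vol' S"
      using hC_from_cond[OF CV[OF C]] ne cnd C by blast
    have dy: "\<And>a. a \<in> C \<Longrightarrow> d a * y a = sd a * x a"
      using CV[OF C] sdsq sdpos unfolding y_def by (fastforce simp: field_simps)
    have dy2: "\<And>a. a \<in> C \<Longrightarrow> d a * (y a)^2 = (x a)^2"
      using CV[OF C] sdsq sdpos unfolding y_def by (fastforce simp: field_simps power2_eq_square)
    have "ip x (wC C) = (\<Sum>a\<in>V. if a \<in> C then sd a * x a else 0)"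
      unfolding ip_def wC_def by (intro sum.cong refl) auto
    also have "\<dots> = (\<Sum>a\<in>V \<inter> C. sd a * x a)" by (rule sum.inter_restrict[OF finV, symmetric])
    also have "V \<inter> C = C" using CV[OF C] by blast
    finally have "(\<Sum>a\<in>C. sd a * x a) = 0" using xW C by auto
    hence s0: "(\<Sum>a\<in>C. d a * y a) = 0" using dy by (metis (no_types, lifting) sum.cong)
    have "\<phi>^2 * (\<Sum>a\<in>C. d a * (y a)^2) \<le> QC C y"
      by (rule cluster[OF CV[OF C] _ hC s0]) (use phi in auto)
    moreover have "(\<Sum>a\<in>C. d a * (y a)^2) = (\<Sum>a\<in>C. (x a)^2)" using dy2 by (rule sum.cong[OF refl])
    ultimately show ?thesis by simp
  qed
  have nsqP: "nsq x = (\<Sum>C\<in>P. \<Sum>a\<in>C. (x a)^2)"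
  proof -
    have "nsq x = (\<Sum>a\<in>\<Union>P. (x a)^2)" unfolding nsq_def ip_def UP by (simp add: power2_eq_square)
    also have "\<dots> = (\<Sum>C\<in>P. \<Sum>a\<in>C. (x a)^2)" using sum.Union_disjoint[of P "\<lambda>a. (x a)^2"] disj fCs by simp
    finally show ?thesis .
  qed
  have QP: "(\<Sum>C\<in>P. QC C y) \<le> Qm x"
  proof -
    define f where "f = (\<lambda>a b. if E a b then (y a - y b)^2 else 0)"
    have fnn: "\<And>a b. f a b \<ge> 0" unfolding f_def by auto
    have "(\<Sum>C\<in>P. QC C y) = (\<Sum>C\<in>P. \<Sum>a\<in>C. \<Sum>b\<in>C. f a b)" unfolding QC_def f_def ..
    also have "\<dots> \<le> (\<Sum>C\<in>P. \<Sum>a\<in>C. \<Sum>b\<in>V. f a b)"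
    proof (intro sum_mono)
      fix C a assume C: "C \<in> P" and a: "a \<in> C"
      show "(\<Sum>b\<in>C. f a b) \<le> (\<Sum>b\<in>V. f a b)" by (rule sum_mono2[OF finV CV[OF C]]) (use fnn in auto)
    qed
    also have "\<dots> = (\<Sum>a\<in>\<Union>P. \<Sum>b\<in>V. f a b)" using sum.Union_disjoint[of P "\<lambda>a. \<Sum>b\<in>V. f a b"] disj fCs by simp
    also have "\<dots> = Qm x" unfolding UP Qm_def f_def y_def by (rule refl)
    finally show ?thesis .
  qed
  have "\<phi>^2 * nsq x \<le> Qm x"
  proof -
    have "\<phi>^2 * nsq x = (\<Sum>C\<in>P. \<phi>^2 * (\<Sum>a\<in>C. (x a)^2))" unfolding nsqP by (simp add: sum_distrib_left)
    also have "\<dots> \<le> (\<Sum>C\<in>P. QC C y)" using clus by (intro sum_mono) auto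
    finally show ?thesis using QP by linarith
  qed
  moreover have "(1 - \<phi>^2 / 4) * nsq x = nsq x - \<phi>^2 * nsq x / 4" by (simp add: algebra_simps)
  ultimately show ?thesis unfolding Fq_ip quad_eq by linarith
qed

end


lemma exp_bound:
  fixes \<phi> vol :: real and t :: nat
  assumes phi: "\<phi> > 0" and vol: "vol > 0" and t: "real t \<ge> 2 * ln vol / \<phi>^2"
  shows "((max 0 (1 - \<phi>^2 / 4))^2)^t \<le> 1 / vol"
proof -
  define r where "r = max 0 (1 - \<phi>^2 / 4)"
  have r0: "r \<ge> 0" by (simp add: r_def)
  have re: "r \<le> exp (- (\<phi>^2 / 4))"
  proof (cases "1 - \<phi>^2 / 4 \<ge> 0")
    case True
    hence "r = 1 - \<phi>^2 / 4" by (simp add: r_def)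
    also have "\<dots> \<le> exp (- (\<phi>^2 / 4))" using exp_ge_add_one_self[of "- (\<phi>^2 / 4)"] by simp
    finally show ?thesis .
  next
    case False thus ?thesis by (simp add: r_def)
  qed
  have "(r^2)^t = r^(2*t)" by (simp add: power_mult)
  also have "\<dots> \<le> (exp (- (\<phi>^2 / 4)))^(2*t)" using re r0 by (intro power_mono) auto
  also have "\<dots> = exp (- (\<phi>^2 * real t / 2))" by (simp add: exp_of_nat_mult[symmetric] field_simps)
  also have "\<dots> \<le> exp (- ln vol)"
  proof -
    have "2 * ln vol \<le> real t * \<phi>^2" using t phi by (simp add: divide_le_eq)
    hence "ln vol \<le> \<phi>^2 * real t / 2" by (simp add: algebra_simps)
    thus ?thesis by simp
  qed
  also have "\<dots> = 1 / vol" using vol by (simp add: exp_minus inverse_eq_divide)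
  finally show ?thesis unfolding r_def .
qed

context gr begin

lemma Nop_expl: "v \<in> V \<Longrightarrow> Nop z v = (z v + (\<Sum>w\<in>V. if E v w then z w / (sd v * sd w) else 0)) / 2"
proof -
  assume v: "v \<in> V"
  have "Nop z v = (\<Sum>w\<in>V. K v w * z w)" using v by (simp add: Nop_def)
  also have "\<dots> = (\<Sum>w\<in>V. ((if v = w then z w else 0) + (if E v w then z w / (sd v * sd w) else 0)) / 2)"
    by (rule sum.cong) (auto simp: K_def field_simps)
  also have "\<dots> = (z v + (\<Sum>w\<in>V. if E v w then z w / (sd v * sd w) else 0)) / 2"
    using v finV by (simp add: sum_divide_distrib[symmetric] sum.distrib)
  finally show ?thesis .
qed

lemma walk_rel: "v \<in> V \<Longrightarrow> walk V E t p v = sd v * (Nop ^^ t) (\<lambda>w. if w \<in> V then p w / sd w else 0) v"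
proof (induction t arbitrary: v)
  case 0 thus ?case using sdpos[of v] by simp
next
  case (Suc t)
  define z where "z = (Nop ^^ t) (\<lambda>w. if w \<in> V then p w / sd w else 0)"
  have v: "v \<in> V" by fact
  have "walk V E (Suc t) p v = (walk V E t p v + (\<Sum>w\<in>{w \<in> V. E v w}. walk V E t p w / real (deg V E w))) / 2"
    by (simp add: Let_def)
  also have "(\<Sum>w\<in>{w \<in> V. E v w}. walk V E t p w / real (deg V E w)) = (\<Sum>w\<in>{w \<in> V. E v w}. z w / sd w)"
  proof (rule sum.cong[OF refl])
    fix w assume w: "w \<in> {w \<in> V. E v w}"
    hence wV: "w \<in> V" by auto
    have "walk V E t p w / real (deg V E w) = sd w * z w / d w" using Suc.IH[OF wV] by (simp add: z_def d_def)
    also have "\<dots> = z w / sd w" using sdsq[OF wV] sdpos[OF wV] dpos2[OF wV] by (simp add: field_simps)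
    finally show "walk V E t p w / real (deg V E w) = z w / sd w" .
  qed
  also have "\<dots> = (\<Sum>w\<in>V. if E v w then z w / sd w else 0)" by (rule sum.inter_filter[OF finV])
  also have "(\<Sum>w\<in>V. if E v w then z w / sd w else 0) = sd v * (\<Sum>w\<in>V. if E v w then z w / (sd v * sd w) else 0)"
    unfolding sum_distrib_left using sdpos[OF v] by (intro sum.cong refl) auto
  finally have "walk V E (Suc t) p v = (sd v * z v + sd v * (\<Sum>w\<in>V. if E v w then z w / (sd v * sd w) else 0)) / 2"
    using Suc.IH[OF v] by (simp add: z_def)
  also have "\<dots> = sd v * Nop z v" unfolding Nop_expl[OF v] by (simp add: algebra_simps)
  finally show ?case by (simp add: z_def)
qed

lemma Dnorm_rel:
  assumes u: "u \<in> V"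
  shows "Dnorm_sq V E (walk V E t (indicator_vec u)) = nsq ((Nop ^^ t) (indicator_vec u)) / d u"
proof -
  define Z where "Z = (Nop ^^ t) (indicator_vec u)"
  have y0: "(\<lambda>w. if w \<in> V then indicator_vec u w / sd w else 0) = (\<lambda>w. (1 / sd u) * indicator_vec u w)"
    using u by (auto simp: indicator_vec_def)
  have wk: "walk V E t (indicator_vec u) v = sd v * ((1 / sd u) * Z v)" if v: "v \<in> V" for v
    using walk_rel[OF v, of t "indicator_vec u"] unfolding y0 funpow_scale Z_def by simp
  have "Dnorm_sq V E (walk V E t (indicator_vec u)) = (\<Sum>v\<in>V. (Z v)^2 / d u)"
    unfolding Dnorm_sq_def
  proof (rule sum.cong[OF refl])
    fix v assume v: "v \<in> V"
    have "(walk V E t (indicator_vec u) v)^2 / real (deg V E v) = (sd v * sd v) * (Z v)^2 / ((sd u * sd u) * d v)"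
      unfolding wk[OF v] by (simp add: d_def power2_eq_square field_simps)
    also have "\<dots> = (Z v)^2 / d u" using sdsq[OF v] sdsq[OF u] dpos2[OF v] by simp
    finally show "(walk V E t (indicator_vec u) v)^2 / real (deg V E v) = (Z v)^2 / d u" .
  qed
  also have "\<dots> = nsq Z / d u" unfolding nsq_def ip_def by (simp add: sum_divide_distrib power2_eq_square)
  finally show ?thesis unfolding Z_def .
qed


lemma main_loc:
  fixes \<alpha> \<phi> :: real and k :: nat
  assumes al: "0 < \<alpha>" "\<alpha> < 1" and k: "k \<ge> 1" and phi: "\<phi> > 0"
    and cl: "clusterable V E k \<phi>"
  shows "\<exists>V'. V' \<subseteq> V \<and> vol V E V' \<ge> (1 - \<alpha>) * vol V E V \<and>
    (\<forall>t::nat. real t \<ge> 2 * ln (vol V E V) / \<phi>\<^sup>2 \<longrightarrow>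
      (\<forall>u\<in>V'. Dnorm_sq V E (walk V E t (indicator_vec u))
                \<le> 2 * real k / (\<alpha> * vol V E V)))"
proof (cases "V = {}")
  case True
  thus ?thesis by (intro exI[of _ "{}"]) (simp add: vol_def)
next
  case Vne: False
  obtain P where P: "finite P" "card P \<le> k" "\<forall>C\<in>P. C \<noteq> {}"
    "\<forall>C\<in>P. \<forall>C'\<in>P. C \<noteq> C' \<longrightarrow> C \<inter> C' = {}" "\<Union>P = V" "\<forall>C\<in>P. cond V E C \<ge> \<phi>"
    using cl unfolding clusterable_def by blast
  define r where "r = max 0 (1 - \<phi>^2 / 4)"
  have r0: "r \<ge> 0" by (simp add: r_def)
  define W where "W = wC ` P"
  have fW: "finite W" using P(1) by (simp add: W_def)
  have cW: "card W \<le> k" using card_image_le[OF P(1), of wC] P(2) unfolding W_def by linarith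
  have PW: "Fq x \<le> r * nsq x" if "vecV x" "\<forall>w\<in>W. ip x w = 0" for x
  proof -
    have "Fq x \<le> (1 - \<phi>^2 / 4) * nsq x"
      by (rule PW_lemma[OF P(1) P(4) P(5) P(3) phi P(6)]) (use that in \<open>auto simp: W_def\<close>)
    also have "\<dots> \<le> r * nsq x" unfolding r_def using nsq_nonneg[of x] by (intro mult_right_mono) auto
    finally show ?thesis .
  qed
  obtain m vs lam where ml: "m < Suc (card W)" and f: "fam r m vs lam" and tm: "termi r m vs"
  proof -
    from peel[of r "Suc (card W)"] show ?thesis
    proof
      assume "\<exists>vs lam. fam r (Suc (card W)) vs lam"
      then obtain vs lam where "fam r (Suc (card W)) vs lam" by blast
      from count[OF this fW PW] show ?thesis by simp
    next
      assume "\<exists>m<Suc (card W). \<exists>vs lam. fam r m vs lam \<and> termi r m vs"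
      thus ?thesis using that by blast
    qed
  qed
  have mk: "m \<le> k" using ml cW by linarith
  define vol0 where "vol0 = vol V E V"
  have vol0: "vol0 = vol' V" unfolding vol0_def by (rule vol_eq)
  have vpos: "vol0 > 0" unfolding vol0 using Vne by (intro vol'_pos) auto
  define a where "a = (\<lambda>u. \<Sum>j<m. (vs j u)^2)"
  have ann: "\<And>u. a u \<ge> 0" unfolding a_def by (intro sum_nonneg) auto
  define B where "B = 2 * real k / (\<alpha> * vol0)"
  have Bpos: "B > 0" unfolding B_def using al vpos k by auto
  define V' where "V' = {u\<in>V. (a u + 1 / vol0) / d u \<le> B}"
  have pt: "Dnorm_sq V E (walk V E t (indicator_vec u)) \<le> B"
    if t: "real t \<ge> 2 * ln vol0 / \<phi>^2" and u: "u \<in> V'" for t u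
  proof -
    have uV: "u \<in> V" using u by (simp add: V'_def)
    have "Dnorm_sq V E (walk V E t (indicator_vec u)) = nsq ((Nop ^^ t) (indicator_vec u)) / d u"
      by (rule Dnorm_rel[OF uV])
    also have "\<dots> \<le> (a u + (r^2)^t) / d u"
      using final_bound[OF f tm r0 uV, of t] dpos2[OF uV] unfolding a_def by (simp add: divide_right_mono)
    also have "\<dots> \<le> (a u + 1 / vol0) / d u"
      using exp_bound[OF phi vpos t] dpos2[OF uV] unfolding r_def by (simp add: divide_right_mono)
    also have "\<dots> \<le> B" using u by (simp add: V'_def)
    finally show ?thesis .
  qed
  define c where "c = \<alpha> * vol0 / (2 * real k)"
  have cpos: "c > 0" unfolding c_def using al vpos k by auto
  have cB: "c * B = 1" unfolding c_def B_def using al vpos k by (simp add: field_simps)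
  have out: "d u \<le> c * (a u + 1 / vol0)" if u: "u \<in> V - V'" for u
  proof -
    have uV: "u \<in> V" using u by auto
    have "\<not> (a u + 1 / vol0) / d u \<le> B" using u by (simp add: V'_def)
    hence "B * d u < a u + 1 / vol0" using dpos2[OF uV] by (simp add: not_le pos_less_divide_eq mult.commute)
    hence "c * (B * d u) \<le> c * (a u + 1 / vol0)" using cpos by (intro mult_left_mono) auto
    thus ?thesis using cB by (simp add: mult.assoc[symmetric])
  qed
  have suma: "(\<Sum>u\<in>V. a u) = real m"
  proof -
    have "(\<Sum>u\<in>V. a u) = (\<Sum>j<m. \<Sum>u\<in>V. (vs j u)^2)" unfolding a_def by (rule sum.swap)
    also have "\<dots> = (\<Sum>j<m. 1)"
    proof (rule sum.cong[OF refl])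
      fix j assume "j \<in> {..<m}"
      hence "nsq (vs j) = 1" using f unfolding fam_def orth_def nsq_def by auto
      thus "(\<Sum>u\<in>V. (vs j u)^2) = 1" unfolding nsq_def ip_def by (simp add: power2_eq_square)
    qed
    finally show ?thesis by simp
  qed
  have cardV: "real (card V) \<le> vol0"
  proof -
    have "real (card V) = (\<Sum>u\<in>V. 1)" by simp
    also have "\<dots> \<le> (\<Sum>u\<in>V. d u)" using dpos' by (intro sum_mono) auto
    finally show ?thesis unfolding vol0 vol'_def .
  qed
  have "vol' (V - V') \<le> (\<Sum>u\<in>V - V'. c * (a u + 1 / vol0))"
    unfolding vol'_def using out by (intro sum_mono) auto
  also have "\<dots> \<le> (\<Sum>u\<in>V. c * (a u + 1 / vol0))"
    using cpos ann vpos by (intro sum_mono2 finV) (auto intro!: mult_nonneg_nonneg add_nonneg_nonneg)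
  also have "\<dots> = c * (real m + real (card V) / vol0)"
    by (simp add: sum_distrib_left[symmetric] sum.distrib suma)
  also have "\<dots> \<le> c * (real k + 1)"
  proof -
    have "real (card V) / vol0 \<le> 1" using cardV vpos by simp
    thus ?thesis using mk cpos by (intro mult_left_mono) auto
  qed
  also have "\<dots> \<le> c * (2 * real k)" using k cpos by (intro mult_left_mono) auto
  also have "\<dots> = \<alpha> * vol0" unfolding c_def using k by simp
  finally have vout: "vol' (V - V') \<le> \<alpha> * vol0" .
  have split: "vol' V = vol' (V - V') + vol' V'"
    unfolding vol'_def by (rule sum.subset_diff) (auto simp: V'_def finV)
  have "vol V E V' \<ge> (1 - \<alpha>) * vol V E V"
    using split vout vol0 unfolding vol_eq vol0_def by (simp add: algebra_simps)
  moreover have "V' \<subseteq> V" by (auto simp: V'_def)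
  ultimately show ?thesis using pt unfolding B_def vol0_def by blast
qed

end

theorem mainTheorem13:
  fixes V :: "'a set" and E :: "'a \<Rightarrow> 'a \<Rightarrow> bool"
    and \<alpha> \<phi>_in :: real and k :: nat
  assumes "graph V E"
    and "0 < \<alpha>" and "\<alpha> < 1" and "k \<ge> 1" and "\<phi>_in > 0"
    and "clusterable V E k \<phi>_in"
    and "\<forall>v\<in>V. deg V E v \<ge> 1"
  shows "\<exists>V'. V' \<subseteq> V \<and> vol V E V' \<ge> (1 - \<alpha>) * vol V E V \<and>
    (\<forall>t::nat. real t \<ge> 2 * ln (vol V E V) / \<phi>_in\<^sup>2 \<longrightarrow>
      (\<forall>u\<in>V'. Dnorm_sq V E (walk V E t (indicator_vec u))
                \<le> 2 * real k / (\<alpha> * vol V E V)))"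
proof -
  interpret gr V E using assms(1,7) by unfold_locales
  show ?thesis by (rule main_loc[OF assms(2-6)])
qed



end
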